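(* Let $(V,\underline M)$ be a correlation algebra with associated family $\underline m=m_2,m_3,\dots$. Then: (1) $m_2(x,1_V)=x$ for all $x\in V$; (2) for all $n\ge3$, $m_n(x_1,\dots,x_n)=0$ whenever $x_j=1_V$ for some $1\le j\le n$; (3) for all $n\ge0$ and $x_1,\dots,x_n,y,z\in V$, $m_{n+2}(x_1,\dots,x_n,y,z)=(-1)^{|y||z|}m_{n+2}(x_1,\dots,x_n,z,y)$; (4) for all $n\ge2$, $x_1,\dots,x_n,y,z\in V$ and $\sigma\in\mathrm{Perm}_n$, $m_{n+2}(x_1,\dots,x_n,y,z)=\epsilon(\sigma)m_{n+2}(x_{\sigma(1)},\dots,x_{\sigma(n)},y,z)$, where $\epsilon(\sigma)$ is the Koszul sign.
   Context: Conventions: $\Bbbk$ is a field of characteristic zero; vector spaces are $\mathbb Z$-graded, $|x|$ is the degree. A pointed graded vector space is $(V,1_V)$ with $1_V\in V^0$. $S^nV$ is the graded symmetric power; maps on $S^nV$ are graded-symmetric multilinear maps (Koszul signs). $P(n)$ is the set of partitions of $[n]$, written $\pi=B_1\sqcup\dots\sqcup B_{|\pi|}$ with blocks ordered by increasing maximal element and elements of each block in increasing order; $k\sim_\pi k'$ means same block. For $B=\{j_1<\dots<j_r\}$, $v_B=v_{j_1}\otimes\dots\otimes v_{j_r}$ and $f(v_B)=f_r(v_{j_1},\dots,v_{j_r})$; $\epsilon(\pi)$ is the Koszul sign of rearranging $v_1\otimes\dots\otimes v_n$ into $v_{B_1}\otimes\dots\otimes v_{B_{|\pi|}}$. A correlation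 algebra is a pair $(V,\underline M)$ where $V$ is a pointed graded vector space and $M_n:S^nV\to V$ ($n\ge1$) are degree-$0$ linear maps with $M_1=\mathrm{id}_V$ and $M_{n+1}(v_1,\dots,v_n,1_V)=M_n(v_1,\dots,v_n)$. Its associated family $m_n:V^{\otimes n}\to V$ ($n\ge2$) is defined recursively by $M_n(v_1,\dots,v_n)=\sum\epsilon(\pi)M_{|\pi|}(v_{B_1},\dots,v_{B_{|\pi|-1}},m(v_{B_{|\pi|}}))$, the sum over $\pi\in P(n)$ with $|B_{|\pi|}|=n-|\pi|+1$ (all blocks but the last are singletons) and $n-1\sim_\pi n$ (the term with $|\pi|=1$ being $m_n(v_1,\dots,v_n)$); in particular $m_2=M_2$. *)

theory Defs
  imports Complex_Main "HOL-Combinatorics.Permutations"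
begin

definition graded_space :: "('k::field \<Rightarrow> 'v::ab_group_add \<Rightarrow> 'v) \<Rightarrow> (int \<Rightarrow> 'v set) \<Rightarrow> bool" where
  "graded_space scale G \<longleftrightarrow>
     vector_space scale \<and> (\<forall>i. module.subspace scale (G i)) \<and>
     (\<forall>v. \<exists>!c. finite {i. c i \<noteq> 0} \<and> (\<forall>i. c i \<in> G i) \<and> v = (\<Sum>i\<in>{i. c i \<noteq> 0}. c i))"

definition homog :: "(int \<Rightarrow> 'v set) \<Rightarrow> 'v list \<Rightarrow> int list \<Rightarrow> bool" where
  "homog G xs ds \<longleftrightarrow> list_all2 (\<lambda>x d. x \<in> G d) xs ds"

text \<open>Koszul sign of rearranging v_0,...,v_{n-1} (degrees ds) into v_{ps!0},...,v_{ps!(n-1)}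
  (ps a permutation of [0..<n]): each pair whose relative order is reversed contributes
  (-1)^(|v_i||v_j|).\<close>
definition koszul :: "int list \<Rightarrow> nat list \<Rightarrow> int" where
  "koszul ds ps = (if even (card {(p, q). p < q \<and> q < length ps \<and> ps ! q < ps ! p \<and>
                                     odd (ds ! (ps ! p) * ds ! (ps ! q))}) then 1 else -1)"

definition multilinear_from :: "('k \<Rightarrow> 'v::ab_group_add \<Rightarrow> 'v) \<Rightarrow> nat \<Rightarrow> ('v list \<Rightarrow> 'v) \<Rightarrow> bool" where
  "multilinear_from scale k f \<longleftrightarrow>
     (\<forall>xs i a u w. k \<le> length xs \<and> i < length xs \<longrightarrow>
        f (xs[i := scale a u + w]) = scale a (f (xs[i := u])) + f (xs[i := w]))"

text \<open>Correlation algebra (V, M): M xs = M_n(x_1,...,x_n) for n = length xs \<ge> 1,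
  degree-0 graded-symmetric multilinear maps with M_1 = id and the unit property.\<close>
definition correlation_algebra ::
  "('k::field \<Rightarrow> 'v::ab_group_add \<Rightarrow> 'v) \<Rightarrow> (int \<Rightarrow> 'v set) \<Rightarrow> 'v \<Rightarrow> ('v list \<Rightarrow> 'v) \<Rightarrow> bool" where
  "correlation_algebra scale G one M \<longleftrightarrow>
     graded_space scale G \<and> one \<in> G 0 \<and>
     multilinear_from scale 1 M \<and>
     (\<forall>xs ds. xs \<noteq> [] \<and> homog G xs ds \<longrightarrow> M xs \<in> G (sum_list ds)) \<and>
     (\<forall>xs ds ps. xs \<noteq> [] \<and> homog G xs ds \<and> distinct ps \<and> set ps = {..<length xs} \<longrightarrow>
        M xs = scale (of_int (koszul ds ps)) (M (map ((!) xs) ps))) \<and>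
     (\<forall>x. M [x] = x) \<and>
     (\<forall>xs. xs \<noteq> [] \<longrightarrow> M (xs @ [one]) = M xs)"

text \<open>The sum ranges
  over the last block B (containing n-1 and n, 0-indexed n-2 and n-1); all other blocks
  are singletons, listed in increasing order.\<close>
definition assoc_family ::
  "('k::field \<Rightarrow> 'v::ab_group_add \<Rightarrow> 'v) \<Rightarrow> (int \<Rightarrow> 'v set) \<Rightarrow> ('v list \<Rightarrow> 'v) \<Rightarrow> ('v list \<Rightarrow> 'v) \<Rightarrow> bool" where
  "assoc_family scale G M m \<longleftrightarrow>
     multilinear_from scale 2 m \<and>
     (\<forall>xs ds. 2 \<le> length xs \<and> homog G xs ds \<longrightarrow>
        M xs = (\<Sum>B\<in>{B. B \<subseteq> {..<length xs} \<and> length xs - 2 \<in> B \<and> length xs - 1 \<in> B}.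
                  scale (of_int (koszul ds (sorted_list_of_set ({..<length xs} - B) @ sorted_list_of_set B)))
                    (M (map ((!) xs) (sorted_list_of_set ({..<length xs} - B))
                        @ [m (map ((!) xs) (sorted_list_of_set B))]))))"

end

theory Submission
  imports Defs
begin


definition bef :: "nat list \<Rightarrow> nat \<Rightarrow> nat \<Rightarrow> bool" where
  "bef ps u v \<longleftrightarrow> (\<exists>p q. p < q \<and> q < length ps \<and> ps!p = u \<and> ps!q = v)"

definition INV :: "int list \<Rightarrow> nat list \<Rightarrow> (nat \<times> nat) set" where
  "INV ds ps = {(u,v). u < v \<and> odd (ds!u * ds!v) \<and> bef ps v u}"

lemma bef_set: "bef ps u v \<Longrightarrow> u \<in> set ps \<and> v \<in> set ps"
  unfolding bef_def by auto

lemma finite_INV: "finite (INV ds ps)"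
proof -
  have "INV ds ps \<subseteq> set ps \<times> set ps" unfolding INV_def using bef_set by blast
  thus ?thesis by (rule finite_subset) auto
qed

lemma koszul_INV:
  assumes "distinct ps"
  shows "koszul ds ps = (-1) ^ card (INV ds ps)"
proof -
  let ?Pos = "{(p, q). p < q \<and> q < length ps \<and> ps ! q < ps ! p \<and>
                                     odd (ds ! (ps ! p) * ds ! (ps ! q))}"
  let ?f = "\<lambda>(p,q). (ps!q, ps!p)"
  have "bij_betw ?f ?Pos (INV ds ps)"
  proof (rule bij_betw_imageI)
    show "inj_on ?f ?Pos"
      using assms by (auto simp: inj_on_def nth_eq_iff_index_eq)
    show "?f ` ?Pos = INV ds ps"
    proof
      show "?f ` ?Pos \<subseteq> INV ds ps"
        by (auto simp: INV_def bef_def mult.commute)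
      show "INV ds ps \<subseteq> ?f ` ?Pos"
      proof
        fix x assume "x \<in> INV ds ps"
        then obtain u v p q where x: "x = (u,v)" "u < v" "odd (ds!u * ds!v)" "p < q" "q < length ps"
          "ps!p = v" "ps!q = u" unfolding INV_def bef_def by auto
        hence "(p,q) \<in> ?Pos" by (auto simp: mult.commute)
        thus "x \<in> ?f ` ?Pos" using x by force
      qed
    qed
  qed
  hence "card ?Pos = card (INV ds ps)" by (rule bij_betw_same_card)
  thus ?thesis unfolding koszul_def by (simp add: minus_one_power_iff)
qed

lemma bef_append: "bef (xs @ ys) u v \<longleftrightarrow> bef xs u v \<or> bef ys u v \<or> (u \<in> set xs \<and> v \<in> set ys)"
proof
  assume "bef (xs @ ys) u v"
  then obtain p q where pq: "p < q" "q < length (xs@ys)" "(xs@ys)!p = u" "(xs@ys)!q = v"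
    unfolding bef_def by blast
  show "bef xs u v \<or> bef ys u v \<or> (u \<in> set xs \<and> v \<in> set ys)"
  proof (cases "q < length xs")
    case True
    hence "bef xs u v" using pq unfolding bef_def by (intro exI[of _ p] exI[of _ q]) (auto simp: nth_append)
    thus ?thesis by simp
  next
    case False
    show ?thesis
    proof (cases "p < length xs")
      case True
      hence "u \<in> set xs" "v \<in> set ys" using pq False by (auto simp: nth_append)
      thus ?thesis by simp
    next
      case F2: False
      have "bef ys u v" unfolding bef_def
        using pq False F2 by (intro exI[of _ "p - length xs"] exI[of _ "q - length xs"]) (auto simp: nth_append)
      thus ?thesis by simp
    qed
  qed
next
  assume "bef xs u v \<or> bef ys u v \<or> (u \<in> set xs \<and> v \<in> set ys)"
  then consider "bef xs u v" | "bef ys u v" | "u \<in> set xs \<and> v \<in> set ys" by blast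
  thus "bef (xs @ ys) u v"
  proof cases
    case 1
    then obtain p q where "p < q" "q < length xs" "xs!p = u" "xs!q = v" unfolding bef_def by blast
    thus ?thesis unfolding bef_def
      by (intro exI[of _ p] exI[of _ q]) (auto simp: nth_append)
  next
    case 2
    then obtain p q where "p < q" "q < length ys" "ys!p = u" "ys!q = v" unfolding bef_def by blast
    thus ?thesis unfolding bef_def
      by (intro exI[of _ "length xs + p"] exI[of _ "length xs + q"]) (auto simp: nth_append)
  next
    case 3
    then obtain p q where "p < length xs" "xs!p = u" "q < length ys" "ys!q = v"
      by (auto simp: in_set_conv_nth)
    thus ?thesis unfolding bef_def
      by (intro exI[of _ p] exI[of _ "length xs + q"]) (auto simp: nth_append)
  qed
qed

lemma bef_nth: "distinct xs \<Longrightarrow> a < length xs \<Longrightarrow> b < length xs \<Longrightarrow> bef xs (xs!a) (xs!b) \<longleftrightarrow> a < b"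
  unfolding bef_def by (auto simp: nth_eq_iff_index_eq)

lemma bef_asym: "distinct xs \<Longrightarrow> bef xs u v \<Longrightarrow> \<not> bef xs v u"
  unfolding bef_def by (metis less_trans nth_eq_iff_index_eq order_less_asym')

lemma bef_total: "u \<in> set xs \<Longrightarrow> v \<in> set xs \<Longrightarrow> u \<noteq> v \<Longrightarrow> bef xs u v \<or> bef xs v u"
  unfolding bef_def in_set_conv_nth by (metis linorder_neqE_nat)

lemma bef_sorted: "sorted xs \<Longrightarrow> distinct xs \<Longrightarrow> bef xs u v \<longleftrightarrow> u \<in> set xs \<and> v \<in> set xs \<and> u < v"
proof
  assume s: "sorted xs" "distinct xs" and b: "bef xs u v"
  then obtain p q where "p < q" "q < length xs" "xs!p = u" "xs!q = v" unfolding bef_def by blast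
  moreover hence "u \<le> v" using s sorted_nth_mono by fastforce
  moreover have "u \<noteq> v" using calculation s by (auto simp: nth_eq_iff_index_eq)
  ultimately show "u \<in> set xs \<and> v \<in> set xs \<and> u < v" using bef_set[OF b] by auto
next
  assume s: "sorted xs" "distinct xs" and h: "u \<in> set xs \<and> v \<in> set xs \<and> u < v"
  have "u \<noteq> v" using h by auto
  then consider "bef xs u v" | "bef xs v u" using bef_total h by blast
  thus "bef xs u v"
  proof cases
    case 2
    then obtain p q where "p < q" "q < length xs" "xs!p = v" "xs!q = u" unfolding bef_def by blast
    hence "v \<le> u" using s sorted_nth_mono by fastforce
    thus ?thesis using h by auto
  qed
qed

lemma bef_map: "bef (map f xs) a b \<longleftrightarrow> (\<exists>u v. bef xs u v \<and> f u = a \<and> f v = b)"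
proof
  assume "bef (map f xs) a b"
  then obtain p q where "p < q" "q < length xs" "f (xs!p) = a" "f (xs!q) = b" unfolding bef_def by auto
  hence "bef xs (xs!p) (xs!q)" "f (xs!p) = a" "f (xs!q) = b" unfolding bef_def by auto
  thus "\<exists>u v. bef xs u v \<and> f u = a \<and> f v = b" by blast
next
  assume "\<exists>u v. bef xs u v \<and> f u = a \<and> f v = b"
  then obtain p q where "p < q" "q < length xs" "f (xs!p) = a" "f (xs!q) = b" unfolding bef_def by auto
  thus "bef (map f xs) a b" unfolding bef_def by (intro exI[of _ p] exI[of _ q]) auto
qed

lemma bef_map_inj: "inj_on f (set xs) \<Longrightarrow> u \<in> set xs \<Longrightarrow> v \<in> set xs \<Longrightarrow>
    bef (map f xs) (f u) (f v) \<longleftrightarrow> bef xs u v"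
proof
  assume i: "inj_on f (set xs)" "u \<in> set xs" "v \<in> set xs" and "bef (map f xs) (f u) (f v)"
  then obtain u' v' where "bef xs u' v'" "f u' = f u" "f v' = f v" unfolding bef_map by blast
  moreover hence "u' = u" "v' = v" using i bef_set[OF calculation(1)] by (auto simp: inj_on_def)
  ultimately show "bef xs u v" by simp
next
  assume "bef xs u v" thus "bef (map f xs) (f u) (f v)" unfolding bef_map by blast
qed

definition CR :: "int list \<Rightarrow> nat set \<Rightarrow> nat set \<Rightarrow> (nat \<times> nat) set" where
  "CR ds X Y = {(u,v). u < v \<and> odd (ds!u * ds!v) \<and> v \<in> X \<and> u \<in> Y}"

lemma INV_append:
  assumes "distinct (xs @ ys)"
  shows "card (INV ds (xs @ ys)) = card (INV ds xs) + card (INV ds ys) + card (CR ds (set xs) (set ys))"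
proof -
  have eq: "INV ds (xs @ ys) = INV ds xs \<union> INV ds ys \<union> CR ds (set xs) (set ys)"
    unfolding INV_def CR_def bef_append by auto
  have f: "finite (CR ds (set xs) (set ys))"
    by (rule finite_subset[of _ "set ys \<times> set xs"]) (auto simp: CR_def)
  have d1: "INV ds xs \<inter> INV ds ys = {}" using assms
    by (auto simp: INV_def dest!: bef_set)
  have d2: "(INV ds xs \<union> INV ds ys) \<inter> CR ds (set xs) (set ys) = {}" using assms
    by (auto simp: INV_def CR_def dest!: bef_set)
  show ?thesis unfolding eq
    by (subst card_Un_disjoint[OF _ f d2]) (auto simp: finite_INV card_Un_disjoint[OF finite_INV finite_INV d1])
qed

lemma INV_sorted: "sorted xs \<Longrightarrow> distinct xs \<Longrightarrow> INV ds xs = {}"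
  unfolding INV_def by (auto simp: bef_sorted)

lemma INV_cong: "(\<And>u. u \<in> set ps \<Longrightarrow> ds!u = ds'!u) \<Longrightarrow> INV ds ps = INV ds' ps"
  unfolding INV_def by (auto dest: bef_set)

lemma INV_relabel:
  assumes mono: "\<And>x y. x \<in> set \<tau> \<Longrightarrow> y \<in> set \<tau> \<Longrightarrow> x < y \<Longrightarrow> f x < f y"
    and deg: "\<And>i. i \<in> set \<tau> \<Longrightarrow> es!i = ds!(f i)"
  shows "card (INV ds (map f \<tau>)) = card (INV es \<tau>)"
proof -
  have inj: "inj_on f (set \<tau>)" using mono by (metis inj_onI linorder_neqE_nat order_less_irrefl)
  let ?g = "\<lambda>(i,j). (f i, f j)"
  have "bij_betw ?g (INV es \<tau>) (INV ds (map f \<tau>))"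
  proof (rule bij_betw_imageI)
    show "inj_on ?g (INV es \<tau>)" using inj
      by (auto simp: inj_on_def INV_def dest!: bef_set)
    show "?g ` INV es \<tau> = INV ds (map f \<tau>)"
    proof
      show "?g ` INV es \<tau> \<subseteq> INV ds (map f \<tau>)"
      proof
        fix x assume "x \<in> ?g ` INV es \<tau>"
        then obtain i j where x: "x = (f i, f j)" "i < j" "odd (es!i * es!j)" "bef \<tau> j i"
          unfolding INV_def by auto
        thus "x \<in> INV ds (map f \<tau>)" using bef_set[OF x(4)] mono deg
          unfolding INV_def by (auto simp: bef_map)
      qed
      show "INV ds (map f \<tau>) \<subseteq> ?g ` INV es \<tau>"
      proof
        fix x assume "x \<in> INV ds (map f \<tau>)"
        then obtain i j where x: "x = (f i, f j)" "f i < f j" "odd (ds!(f i) * ds!(f j))" "bef \<tau> j i"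
          unfolding INV_def bef_map by auto
        have ij: "i \<in> set \<tau>" "j \<in> set \<tau>" using bef_set[OF x(4)] by auto
        have "i < j" using mono[OF ij(2) ij(1)] x(2) ij by (metis linorder_neqE_nat order_less_asym)
        hence "(i,j) \<in> INV es \<tau>" using x deg ij unfolding INV_def by auto
        thus "x \<in> ?g ` INV es \<tau>" using x by force
      qed
    qed
  qed
  thus ?thesis by (metis bij_betw_same_card)
qed

lemma kos_append: "distinct (xs @ ys) \<Longrightarrow>
   koszul ds (xs @ ys) = koszul ds xs * koszul ds ys * (-1) ^ card (CR ds (set xs) (set ys))"
  by (simp add: koszul_INV INV_append power_add)

lemma kos_sorted: "sorted xs \<Longrightarrow> distinct xs \<Longrightarrow> koszul ds xs = 1"
  by (simp add: koszul_INV INV_sorted)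

lemma kos_cong: "distinct ps \<Longrightarrow> (\<And>u. u \<in> set ps \<Longrightarrow> ds!u = ds'!u) \<Longrightarrow> koszul ds ps = koszul ds' ps"
  by (simp add: koszul_INV INV_cong[of ps ds ds'])

lemma kos_relabel:
  assumes "distinct \<tau>" and mono: "\<And>x y. x \<in> set \<tau> \<Longrightarrow> y \<in> set \<tau> \<Longrightarrow> x < y \<Longrightarrow> f x < f y"
    and deg: "\<And>i. i \<in> set \<tau> \<Longrightarrow> es!i = ds!(f i)"
  shows "koszul ds (map f \<tau>) = koszul es \<tau>"
proof -
  have "inj_on f (set \<tau>)" using mono by (metis inj_onI linorder_neqE_nat order_less_irrefl)
  hence "distinct (map f \<tau>)" using assms(1) by (simp add: distinct_map)
  thus ?thesis using assms by (simp add: koszul_INV INV_relabel[of \<tau> f es ds])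
qed

lemma kos_sl2: "finite X \<Longrightarrow> finite Y \<Longrightarrow> X \<inter> Y = {} \<Longrightarrow>
    koszul ds (sorted_list_of_set X @ sorted_list_of_set Y) = (-1) ^ card (CR ds X Y)"
  by (subst kos_append) (auto simp: kos_sorted)

lemma kos_top:
  assumes "distinct ps" "set ps \<subseteq> {..<length ds}"
  shows "koszul (ds @ es) (ps @ [length ds..<length ds + m]) = koszul ds ps"
proof -
  have d: "distinct (ps @ [length ds..<length ds + m])" using assms by auto
  have "CR (ds @ es) (set ps) (set [length ds..<length ds + m]) = {}"
    using assms by (auto simp: CR_def)
  moreover have "koszul (ds @ es) ps = koszul ds ps"
    using assms by (intro kos_cong) (auto simp: nth_append)
  ultimately show ?thesis using d by (simp add: kos_append kos_sorted)
qed

lemma bef_pair: "bef [x, y] u v \<longleftrightarrow> u = x \<and> v = y"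
proof
  assume "bef [x, y] u v"
  then obtain p q where "p < q" "q < 2" "[x,y]!p = u" "[x,y]!q = v" unfolding bef_def by auto
  moreover hence "p = 0" "q = 1" by auto
  ultimately show "u = x \<and> v = y" by auto
next
  assume "u = x \<and> v = y" thus "bef [x, y] u v" unfolding bef_def
    by (intro exI[of _ 0] exI[of _ 1]) auto
qed

lemma kos_swap:
  assumes "k = length ds"
  shows "koszul (ds @ [a, b]) ([0..<k] @ [Suc k, k]) = (if odd (a * b) then -1 else 1)"
proof -
  have d: "distinct ([0..<k] @ [Suc k, k])" by auto
  have "CR (ds @ [a, b]) (set [0..<k]) (set [Suc k, k]) = {}" by (auto simp: CR_def)
  moreover have "INV (ds @ [a, b]) [Suc k, k] = (if odd (a*b) then {(k, Suc k)} else {})"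
    using assms by (auto simp: INV_def bef_pair nth_append)
  ultimately show ?thesis using d
    by (simp add: kos_append kos_sorted koszul_INV[of "[Suc k, k]"])
qed

lemma kos_move:
  assumes "c < length ds" "even (ds ! c)"
  shows "koszul ds ([0..<c] @ [Suc c..<length ds] @ [c]) = 1"
proof -
  have d: "distinct (([0..<c] @ [Suc c..<length ds]) @ [c])" by auto
  have s: "sorted ([0..<c] @ [Suc c..<length ds])" "distinct ([0..<c] @ [Suc c..<length ds])"
    by (auto simp: sorted_append)
  have "CR ds (set ([0..<c] @ [Suc c..<length ds])) (set [c]) = {}"
    using assms by (auto simp: CR_def)
  thus ?thesis using kos_append[OF d, of ds] kos_sorted[OF s] kos_sorted[of "[c]" ds] by simp
qed

lemma kos_block:
  assumes "distinct p1" "set p1 \<subseteq> {..<length d1}" "distinct p2" "set p2 \<subseteq> {..<length d2}"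
  shows "koszul (d1 @ d2) (p1 @ map (\<lambda>i. i + length d1) p2) = koszul d1 p1 * koszul d2 p2"
proof -
  have d: "distinct (p1 @ map (\<lambda>i. i + length d1) p2)" using assms
    by (auto simp: distinct_map inj_on_def)
  have "CR (d1 @ d2) (set p1) (set (map (\<lambda>i. i + length d1) p2)) = {}"
    using assms by (auto simp: CR_def)
  moreover have "koszul (d1 @ d2) p1 = koszul d1 p1"
    using assms by (intro kos_cong) (auto simp: nth_append)
  moreover have "koszul (d1 @ d2) (map (\<lambda>i. i + length d1) p2) = koszul d2 p2"
    using assms by (intro kos_relabel) (auto simp: nth_append)
  ultimately show ?thesis using d by (simp add: kos_append)
qed

lemma kos_cocycle:
  assumes P: "distinct P" "set P = {..<n}" and Q: "distinct Q" "set Q = {..<n}"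
  shows "koszul ds (map ((!) P) Q) = koszul ds P * koszul (map ((!) ds) P) Q"
proof -
  define R where "R = map ((!) P) Q"
  define e where "e = map ((!) ds) P"
  have lenP: "length P = n" using P distinct_card by fastforce
  have injP: "inj_on ((!) P) {..<n}" using P lenP by (simp add: inj_on_nth)
  have "(!) P ` {0..<n} = set P" using nth_image[of n P] lenP by simp
  hence i: "(!) P ` {..<n} = {..<n}" using P(2) by (simp only: atLeast0LessThan)
  have setR: "set R = {..<n}" unfolding R_def set_map Q(2) i ..
  have dR: "distinct R" unfolding R_def using Q injP by (simp add: distinct_map)
  have sP: "\<And>a b. bef P a b \<Longrightarrow> a < n \<and> b < n" using bef_set P by blast
  have sR: "\<And>a b. bef R a b \<Longrightarrow> a < n \<and> b < n" using bef_set setR by blast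
  have bP: "\<And>a b. a < n \<Longrightarrow> b < n \<Longrightarrow> bef P (P!a) (P!b) \<longleftrightarrow> a < b"
    using bef_nth P lenP by blast
  have bR: "\<And>a b. a < n \<Longrightarrow> b < n \<Longrightarrow> bef R (P!a) (P!b) \<longleftrightarrow> bef Q a b"
    unfolding R_def using bef_map_inj[of "(!) P" Q] injP Q by auto
  define X where "X = {(u,v). u < v \<and> odd (ds!u * ds!v) \<and> u < n \<and> v < n \<and> (bef P v u \<noteq> bef R v u)}"
  have finX: "finite X" by (rule finite_subset[of _ "{..<n} \<times> {..<n}"]) (auto simp: X_def)
  have eq1: "INV ds R = (INV ds P - X) \<union> (X - INV ds P)"
    unfolding INV_def X_def using sP sR by auto
  have eq2: "card X = card (INV e Q)"
  proof -
    let ?f = "\<lambda>(i,j). (min (P!i) (P!j), max (P!i) (P!j))"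
    have sQ: "\<And>a b. bef Q a b \<Longrightarrow> a < n \<and> b < n" using bef_set Q by blast
    have inj: "inj_on ?f (INV e Q)"
    proof (rule inj_onI)
      fix x y assume x: "x \<in> INV e Q" and y: "y \<in> INV e Q" and fxy: "?f x = ?f y"
      obtain i j where ij: "x = (i,j)" "i < j" "bef Q j i" using x unfolding INV_def by auto
      obtain i' j' where ij': "y = (i',j')" "i' < j'" "bef Q j' i'" using y unfolding INV_def by auto
      have n: "i < n" "j < n" "i' < n" "j' < n" using sQ ij ij' by auto
      have "P!i = P!i' \<and> P!j = P!j' \<or> P!i = P!j' \<and> P!j = P!i'"
        using fxy ij ij' by (auto simp: min_def max_def split: if_splits)
      hence "i = i' \<and> j = j' \<or> i = j' \<and> j = i'"
        using n injP by (auto simp: inj_on_def)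
      thus "x = y" using ij ij' by auto
    qed
    have img: "?f ` INV e Q = X"
    proof
      show "?f ` INV e Q \<subseteq> X"
      proof
        fix x assume "x \<in> ?f ` INV e Q"
        then obtain i j where x: "x = ?f (i,j)" "i < j" "odd (e!i * e!j)" "bef Q j i"
          unfolding INV_def by auto
        have n: "i < n" "j < n" using sQ x by auto
        have ne: "P!i \<noteq> P!j" using n injP x(2) by (auto simp: inj_on_def)
        have od: "odd (ds!(P!i) * ds!(P!j))" using x n lenP by (simp add: e_def)
        have pn: "P!i < n" "P!j < n" using n lenP P nth_mem by (metis lessThan_iff)+
        show "x \<in> X"
        proof (cases "P!i < P!j")
          case True
          thus ?thesis using x n bP bR od pn unfolding X_def by auto
        next
          case False
          hence "P!j < P!i" using ne by auto
          moreover have "\<not> bef Q i j" using bef_asym[OF Q(1) x(4)] .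
          ultimately show ?thesis using x n bP bR od pn unfolding X_def by (auto simp: mult.commute)
        qed
      qed
      show "X \<subseteq> ?f ` INV e Q"
      proof
        fix x assume "x \<in> X"
        then obtain u v where x: "x = (u,v)" "u < v" "odd (ds!u * ds!v)" "u < n" "v < n"
          "bef P v u \<noteq> bef R v u" unfolding X_def by auto
        obtain a where a: "a < n" "P!a = u" using x P lenP by (metis in_set_conv_nth lessThan_iff)
        obtain b where b: "b < n" "P!b = v" using x P lenP by (metis in_set_conv_nth lessThan_iff)
        have ab: "a \<noteq> b" using a b x by auto
        have ea: "e!a = ds!u" "e!b = ds!v" using a b lenP by (auto simp: e_def)
        show "x \<in> ?f ` INV e Q"
        proof (cases "a < b")
          case True
          hence "bef Q b a" using x a b bP bR by auto
          hence "(a,b) \<in> INV e Q" using True ea x unfolding INV_def by auto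
          moreover have "?f (a,b) = x" using a b x by auto
          ultimately show ?thesis by force
        next
          case False
          hence "\<not> bef Q b a" using x a b bP bR ab by auto
          hence "bef Q a b" using bef_total[of a Q b] Q a b ab by auto
          hence "(b,a) \<in> INV e Q" using False ab ea x unfolding INV_def by (auto simp: mult.commute)
          moreover have "?f (b,a) = x" using a b x by auto
          ultimately show ?thesis by force
        qed
      qed
    qed
    show ?thesis using card_image[OF inj] img by simp
  qed
  let ?A = "INV ds P"
  have fA: "finite ?A" by (rule finite_INV)
  have c1: "card ?A + card X = card (?A \<union> X) + card (?A \<inter> X)" using card_Un_Int fA finX by blast
  have c2: "card (?A \<union> X) = card ((?A - X) \<union> (X - ?A)) + card (?A \<inter> X)"
  proof -
    have e: "?A \<union> X = ((?A - X) \<union> (X - ?A)) \<union> (?A \<inter> X)" by auto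
    have "card (((?A - X) \<union> (X - ?A)) \<union> (?A \<inter> X)) = card ((?A - X) \<union> (X - ?A)) + card (?A \<inter> X)"
      by (rule card_Un_disjoint) (use fA finX in auto)
    thus ?thesis using e by simp
  qed
  have "card (INV ds R) + 2 * card (?A \<inter> X) = card ?A + card X" using c1 c2 eq1 by simp
  hence "(-1::int) ^ (card ?A + card X) = (-1) ^ (card (INV ds R) + 2 * card (?A \<inter> X))" by simp
  hence "(-1::int) ^ card (INV ds R) = (-1) ^ (card ?A + card X)"
    by (simp add: power_add power_mult)
  thus ?thesis unfolding R_def[symmetric] e_def[symmetric]
    using dR P Q by (simp add: koszul_INV power_add eq2)
qed


lemma ml_add:
  assumes "multilinear_from scale k f" "vector_space scale" "k \<le> length xs" "i < length xs"
  shows "f (xs[i := u + w]) = f (xs[i := u]) + f (xs[i := w])"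
proof -
  have "f (xs[i := scale 1 u + w]) = scale 1 (f (xs[i := u])) + f (xs[i := w])"
    using assms(1,3,4) unfolding multilinear_from_def by blast
  interpret vector_space scale by (rule assms(2))
  show ?thesis using \<open>f (xs[i := scale 1 u + w]) = _\<close> by simp
qed

lemma ml_zero:
  assumes "multilinear_from scale k f" "vector_space scale" "k \<le> length xs" "i < length xs"
  shows "f (xs[i := 0]) = 0"
  using ml_add[OF assms, of 0 0] by simp

lemma ml_scale:
  assumes "multilinear_from scale k f" "vector_space scale" "k \<le> length xs" "i < length xs"
  shows "f (xs[i := scale a u]) = scale a (f (xs[i := u]))"
proof -
  have "f (xs[i := scale a u + 0]) = scale a (f (xs[i := u])) + f (xs[i := 0])"
    using assms(1,3,4) unfolding multilinear_from_def by blast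
  thus ?thesis using ml_zero[OF assms] by simp
qed

abbreviation sl :: "nat set \<Rightarrow> nat list" where "sl \<equiv> sorted_list_of_set"

definition sub :: "'a list \<Rightarrow> nat set \<Rightarrow> 'a list" where
  "sub xs S = map ((!) xs) (sl S)"

lemma sl_union:
  assumes "finite X" "finite Y" "\<And>x y. x \<in> X \<Longrightarrow> y \<in> Y \<Longrightarrow> x < y"
  shows "sl (X \<union> Y) = sl X @ sl Y"
proof (rule sorted_distinct_set_unique)
  show "sorted (sl X @ sl Y)" using assms by (auto simp: sorted_append less_imp_le)
  show "distinct (sl X @ sl Y)" using assms by fastforce
qed (use assms in auto)

lemma sl_lessThan: "sl {..<n} = [0..<n]"
  by (simp add: lessThan_atLeast0)

lemma sub_all: "sub xs {..<length xs} = xs"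
  unfolding sub_def sl_lessThan by (simp add: map_nth)

lemma sub_empty[simp]: "sub xs {} = []"
  unfolding sub_def by simp

lemma length_sub: "finite S \<Longrightarrow> length (sub xs S) = card S"
  unfolding sub_def by simp

lemma sub_append_small: "S \<subseteq> {..<length xs} \<Longrightarrow> sub (xs @ ys) S = sub xs S"
proof -
  assume "S \<subseteq> {..<length xs}"
  moreover have "finite S" using calculation finite_subset by blast
  ultimately show ?thesis unfolding sub_def by (auto simp: nth_append)
qed

lemma homog_len: "homog G xs ds \<Longrightarrow> length ds = length xs"
  unfolding homog_def by (simp add: list_all2_lengthD)

lemma homog_nth: "homog G xs ds \<Longrightarrow> i < length xs \<Longrightarrow> xs!i \<in> G (ds!i)"
  unfolding homog_def by (simp add: list_all2_conv_all_nth)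

lemma homog_iff: "homog G xs ds \<longleftrightarrow> length xs = length ds \<and> (\<forall>i<length xs. xs!i \<in> G (ds!i))"
  unfolding homog_def by (simp add: list_all2_conv_all_nth)

lemma homog_append: "homog G xs ds \<Longrightarrow> homog G ys es \<Longrightarrow> homog G (xs @ ys) (ds @ es)"
  unfolding homog_def by (simp add: list_all2_appendI)

lemma homog_sub: "homog G xs ds \<Longrightarrow> S \<subseteq> {..<length xs} \<Longrightarrow> homog G (sub xs S) (sub ds S)"
proof -
  assume h: "homog G xs ds" and S: "S \<subseteq> {..<length xs}"
  hence f: "finite S" using finite_subset by blast
  have "\<forall>x\<in>set (sl S). x < length xs" using S f by auto
  thus ?thesis using h unfolding sub_def homog_iff by (auto simp: homog_len)
qed

lemma sum_sub: fixes ds :: "'a::comm_monoid_add list" shows "finite S \<Longrightarrow> sum_list (sub ds S) = sum ((!) ds) S"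
  unfolding sub_def by (simp add: sum_list_distinct_conv_sum_set)

lemma sum_list_split: fixes ds :: "'a::comm_monoid_add list" shows "S \<subseteq> {..<length ds} \<Longrightarrow>
   sum_list (sub ds ({..<length ds} - S)) + sum_list (sub ds S) = sum_list ds"
proof -
  assume S: "S \<subseteq> {..<length ds}"
  hence f: "finite S" using finite_subset by blast
  have "sum_list ds = sum ((!) ds) {..<length ds}"
    by (simp add: sum_list_sum_nth lessThan_atLeast0)
  also have "\<dots> = sum ((!) ds) ({..<length ds} - S) + sum ((!) ds) S"
    using S by (simp add: sum.subset_diff)
  finally show ?thesis using f by (simp add: sum_sub)
qed

locale CA =
  fixes scale :: "'k::field_char_0 \<Rightarrow> 'v::ab_group_add \<Rightarrow> 'v"
    and G :: "int \<Rightarrow> 'v set" and one :: 'v and M m :: "'v list \<Rightarrow> 'v"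
  assumes ca: "correlation_algebra scale G one M"
    and af: "assoc_family scale G M m"
begin

lemma vsp: "vector_space scale"
  using ca unfolding correlation_algebra_def graded_space_def by blast

end

sublocale CA \<subseteq> vs: vector_space scale by (rule vsp)

context CA begin

lemma subsp: "vs.subspace (G i)"
  using ca unfolding correlation_algebra_def graded_space_def by blast

lemma decomp: "\<exists>c. finite {i. c i \<noteq> 0} \<and> (\<forall>i. c i \<in> G i) \<and> v = (\<Sum>i\<in>{i. c i \<noteq> 0}. c i)"
  using ca unfolding correlation_algebra_def graded_space_def by metis

lemma one_G: "one \<in> G 0"
  using ca unfolding correlation_algebra_def by blast

lemma Mml: "multilinear_from scale 1 M"
  using ca unfolding correlation_algebra_def by blast

lemma mml: "multilinear_from scale 2 m"
  using af unfolding assoc_family_def by blast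

lemma Mdeg: "xs \<noteq> [] \<Longrightarrow> homog G xs ds \<Longrightarrow> M xs \<in> G (sum_list ds)"
  using ca unfolding correlation_algebra_def by blast

lemma Msym: "xs \<noteq> [] \<Longrightarrow> homog G xs ds \<Longrightarrow> distinct ps \<Longrightarrow> set ps = {..<length xs} \<Longrightarrow>
    M xs = scale (of_int (koszul ds ps)) (M (map ((!) xs) ps))"
  using ca unfolding correlation_algebra_def by blast

lemma M1: "M [x] = x"
  using ca unfolding correlation_algebra_def by blast

lemma Munit: "xs \<noteq> [] \<Longrightarrow> M (xs @ [one]) = M xs"
  using ca unfolding correlation_algebra_def by blast

lemma recm: "2 \<le> length xs \<Longrightarrow> homog G xs ds \<Longrightarrow>
        M xs = (\<Sum>B\<in>{B. B \<subseteq> {..<length xs} \<and> length xs - 2 \<in> B \<and> length xs - 1 \<in> B}.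
                  scale (of_int (koszul ds (sl ({..<length xs} - B) @ sl B)))
                    (M (map ((!) xs) (sl ({..<length xs} - B))
                        @ [m (map ((!) xs) (sl B))])))"
  using af unfolding assoc_family_def by blast

lemma M_last_scale: "M (xs @ [scale a w]) = scale a (M (xs @ [w]))"
  using ml_scale[OF Mml vsp, of "xs @ [w]" "length xs" a w] by simp

lemma M_last_zero: "M (xs @ [0]) = 0"
  using ml_zero[OF Mml vsp, of "xs @ [w]" "length xs"] by simp

definition T :: "'v list \<Rightarrow> int list \<Rightarrow> 'v \<Rightarrow> 'v \<Rightarrow> nat set \<Rightarrow> 'v" where
  "T xs ds y z A = scale (of_int (koszul ds (sl ({..<length xs} - A) @ sl A)))
      (M (sub xs ({..<length xs} - A) @ [m (sub xs A @ [y, z])]))"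

lemma R:
  assumes h: "homog G xs ds" and y: "y \<in> G a" and z: "z \<in> G b"
  shows "M (xs @ [y, z]) = sum (T xs ds y z) (Pow {..<length xs})"
proof -
  define k where "k = length xs"
  have lk: "length ds = k" using h homog_len k_def by metis
  have hh: "homog G (xs @ [y,z]) (ds @ [a,b])" using homog_append[OF h, of "[y,z]" "[a,b]"] y z
    by (simp add: homog_def)
  have r: "M (xs @ [y,z]) = (\<Sum>B\<in>{B. B \<subseteq> {..<k+2} \<and> k \<in> B \<and> Suc k \<in> B}.
                  scale (of_int (koszul (ds @ [a,b]) (sl ({..<k+2} - B) @ sl B)))
                    (M (map ((!) (xs @ [y,z])) (sl ({..<k+2} - B))
                        @ [m (map ((!) (xs @ [y,z])) (sl B))])))"
    using recm[OF _ hh] k_def by simp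
  have img: "{B. B \<subseteq> {..<k+2} \<and> k \<in> B \<and> Suc k \<in> B} = (\<lambda>A. A \<union> {k, Suc k}) ` Pow {..<k}"
  proof
    show "{B. B \<subseteq> {..<k+2} \<and> k \<in> B \<and> Suc k \<in> B} \<subseteq> (\<lambda>A. A \<union> {k, Suc k}) ` Pow {..<k}"
    proof
      fix B assume "B \<in> {B. B \<subseteq> {..<k+2} \<and> k \<in> B \<and> Suc k \<in> B}"
      hence "B = (B - {k, Suc k}) \<union> {k, Suc k}" "B - {k, Suc k} \<in> Pow {..<k}" by auto
      thus "B \<in> (\<lambda>A. A \<union> {k, Suc k}) ` Pow {..<k}" by blast
    qed
  qed auto
  have inj: "inj_on (\<lambda>A. A \<union> {k, Suc k}) (Pow {..<k})"
  proof (rule inj_onI)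
    fix A A' assume "A \<in> Pow {..<k}" "A' \<in> Pow {..<k}" "A \<union> {k, Suc k} = A' \<union> {k, Suc k}"
    hence "(A \<union> {k, Suc k}) - {k, Suc k} = (A' \<union> {k, Suc k}) - {k, Suc k}" by simp
    moreover have "(A \<union> {k, Suc k}) - {k, Suc k} = A" "(A' \<union> {k, Suc k}) - {k, Suc k} = A'"
      using \<open>A \<in> Pow {..<k}\<close> \<open>A' \<in> Pow {..<k}\<close> by auto
    ultimately show "A = A'" by simp
  qed
  have trm: "scale (of_int (koszul (ds @ [a,b]) (sl ({..<k+2} - (A \<union> {k, Suc k})) @ sl (A \<union> {k, Suc k}))))
                    (M (map ((!) (xs @ [y,z])) (sl ({..<k+2} - (A \<union> {k, Suc k})))
                        @ [m (map ((!) (xs @ [y,z])) (sl (A \<union> {k, Suc k})))])) = T xs ds y z A"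
    if A: "A \<in> Pow {..<k}" for A
  proof -
    have fA: "finite A" using A finite_subset by auto
    have c: "{..<k+2} - (A \<union> {k, Suc k}) = {..<k} - A" by auto
    have s2: "sl {k, Suc k} = [k, Suc k]"
    proof -
      have "{k, Suc k} = {k..<Suc (Suc k)}" by auto
      thus ?thesis by simp
    qed
    have sA: "sl (A \<union> {k, Suc k}) = sl A @ [k, Suc k]"
    proof -
      have "\<And>x y. x \<in> A \<Longrightarrow> y \<in> {k, Suc k} \<Longrightarrow> x < y" using A by auto
      thus ?thesis using sl_union[OF fA, of "{k, Suc k}"] s2 by simp
    qed
    have m1: "map ((!) (xs @ [y,z])) (sl A @ [k, Suc k]) = sub xs A @ [y, z]"
      using sub_append_small[of A xs "[y,z]"] A k_def by (simp add: sub_def nth_append)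
    have m2: "map ((!) (xs @ [y,z])) (sl ({..<k} - A)) = sub xs ({..<k} - A)"
      using sub_append_small[of "{..<k} - A" xs "[y,z]"] k_def by (simp add: sub_def)
    have kz: "koszul (ds @ [a,b]) ((sl ({..<k} - A) @ sl A) @ [length ds..<length ds + 2]) =
              koszul ds (sl ({..<k} - A) @ sl A)"
      by (rule kos_top) (use A fA lk in auto)
    have "[length ds..<length ds + 2] = [k, Suc k]" using lk by (simp add: upt_rec)
    thus ?thesis using kz unfolding T_def c sA m1 m2 k_def[symmetric] by simp
  qed
  show ?thesis unfolding r img sum.reindex[OF inj] k_def[symmetric]
    by (rule sum.cong[OF refl]) (unfold o_apply, erule trm)
qed

lemma T_full: "T xs ds y z {..<length xs} = m (xs @ [y, z])"
proof -
  have "koszul ds [0..<length xs] = 1" by (rule kos_sorted) auto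
  thus ?thesis unfolding T_def by (simp add: sub_all M1 sl_lessThan)
qed

lemma R':
  assumes h: "homog G xs ds" and y: "y \<in> G a" and z: "z \<in> G b"
  shows "M (xs @ [y, z]) = m (xs @ [y, z]) + sum (T xs ds y z) (Pow {..<length xs} - {{..<length xs}})"
  using R[OF assms] sum.remove[of "Pow {..<length xs}" "{..<length xs}" "T xs ds y z"] T_full
  by simp

end


context CA begin

lemma ext1:
  fixes F H :: "'v list \<Rightarrow> 'v"
  assumes i: "i < n"
    and aF: "\<And>ys u w. length ys = n \<Longrightarrow> F (ys[i := u + w]) = F (ys[i := u]) + F (ys[i := w])"
    and aH: "\<And>ys u w. length ys = n \<Longrightarrow> H (ys[i := u + w]) = H (ys[i := u]) + H (ys[i := w])"
    and hom: "\<And>ys d. length ys = n \<Longrightarrow> ys!i \<in> G d \<Longrightarrow> Q ys \<Longrightarrow> F ys = H ys"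
    and Qi: "\<And>ys v. Q ys \<Longrightarrow> Q (ys[i := v])"
    and ys: "length ys = n" "Q ys"
  shows "F ys = H ys"
proof -
  have zF: "F (ys[i:=0]) = 0" using aF[OF ys(1), of 0 0] by simp
  have zH: "H (ys[i:=0]) = 0" using aH[OF ys(1), of 0 0] by simp
  have sF: "F (ys[i := sum g J]) = (\<Sum>j\<in>J. F (ys[i := g j]))" if "finite J" for g J
    using that by (induction J rule: finite_induct) (simp_all add: zF aF ys)
  have sH: "H (ys[i := sum g J]) = (\<Sum>j\<in>J. H (ys[i := g j]))" if "finite J" for g J
    using that by (induction J rule: finite_induct) (simp_all add: zH aH ys)
  obtain c where c: "finite {j. c j \<noteq> 0}" "\<forall>j. c j \<in> G j" "ys!i = (\<Sum>j\<in>{j. c j \<noteq> 0}. c j)"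
    using decomp by blast
  have "F ys = F (ys[i := ys!i])" by simp
  also have "\<dots> = (\<Sum>j\<in>{j. c j \<noteq> 0}. F (ys[i := c j]))" using sF c by simp
  also have "\<dots> = (\<Sum>j\<in>{j. c j \<noteq> 0}. H (ys[i := c j]))"
  proof (rule sum.cong[OF refl])
    fix j show "F (ys[i := c j]) = H (ys[i := c j])"
      by (rule hom[of _ j]) (use ys i c Qi in auto)
  qed
  also have "\<dots> = H (ys[i := (\<Sum>j\<in>{j. c j \<noteq> 0}. c j)])" by (rule sH[OF c(1), symmetric])
  finally show ?thesis by (simp add: c(3)[symmetric])
qed

lemma extS:
  fixes F H :: "'v list \<Rightarrow> 'v"
  assumes "finite S" "S \<subseteq> {..<n}"
    and aF: "\<And>i ys u w. i \<in> S \<Longrightarrow> length ys = n \<Longrightarrow> F (ys[i := u + w]) = F (ys[i := u]) + F (ys[i := w])"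
    and aH: "\<And>i ys u w. i \<in> S \<Longrightarrow> length ys = n \<Longrightarrow> H (ys[i := u + w]) = H (ys[i := u]) + H (ys[i := w])"
    and hom: "\<And>ys. length ys = n \<Longrightarrow> (\<forall>i\<in>S. \<exists>d. ys!i \<in> G d) \<Longrightarrow> Q ys \<Longrightarrow> F ys = H ys"
    and Qi: "\<And>i ys v. i \<in> S \<Longrightarrow> Q ys \<Longrightarrow> Q (ys[i := v])"
    and ys: "length ys = n" "Q ys"
  shows "F ys = H ys"
  using assms
proof (induction S arbitrary: Q ys rule: finite_induct)
  case empty
  thus ?case by auto
next
  case (insert s S)
  have IH: "F ys' = H ys'" if "length ys' = n" "Q ys'" "\<exists>d. ys'!s \<in> G d" for ys'
    apply (rule insert.IH[where Q="\<lambda>ys. Q ys \<and> (\<exists>d. ys!s \<in> G d)" and ys=ys'])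
    subgoal using insert.prems(1) by blast
    subgoal for i ys u w by (rule insert.prems(2)) auto
    subgoal for i ys u w by (rule insert.prems(3)) auto
    subgoal for ys by (rule insert.prems(4)) auto
    subgoal for i ys v
    proof -
      assume a: "i \<in> S" "Q ys \<and> (\<exists>d. ys ! s \<in> G d)"
      have "s \<noteq> i" using a insert.hyps by auto
      hence "ys[i := v] ! s = ys ! s" by simp
      thus ?thesis using a insert.prems(5)[of i ys v] by simp
    qed
    subgoal using that by blast
    subgoal using that by blast
    done
  show ?case
  proof (rule ext1[where i=s and n=n and F=F and H=H and Q=Q])
    show "s < n" using insert.prems(1) by auto
    show "F (ys[s := u + w]) = F (ys[s := u]) + F (ys[s := w])" if "length ys = n" for ys u w
      by (rule insert.prems(2)) (use that in auto)
    show "H (ys[s := u + w]) = H (ys[s := u]) + H (ys[s := w])" if "length ys = n" for ys u w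
      by (rule insert.prems(3)) (use that in auto)
    show "F ys = H ys" if "length ys = n" "ys ! s \<in> G d" "Q ys" for ys d
      using IH that by blast
    show "Q (ys[s := v])" if "Q ys" for ys v by (rule insert.prems(5)) (use that in auto)
    show "length ys = n" by (rule insert.prems(6))
    show "Q ys" by (rule insert.prems(7))
  qed
qed

lemma m_add: "2 \<le> length xs \<Longrightarrow> i < length xs \<Longrightarrow> m (xs[i := u + w]) = m (xs[i := u]) + m (xs[i := w])"
  by (rule ml_add[OF mml vsp])

lemma M_add: "1 \<le> length xs \<Longrightarrow> i < length xs \<Longrightarrow> M (xs[i := u + w]) = M (xs[i := u]) + M (xs[i := w])"
  by (rule ml_add[OF Mml vsp])

lemma mdeg_aux:
  "homog G xs ds \<Longrightarrow> y \<in> G a \<Longrightarrow> z \<in> G b \<Longrightarrow> m (xs @ [y,z]) \<in> G (sum_list ds + a + b)"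
proof (induction "length xs" arbitrary: xs ds a b y z rule: less_induct)
  case less
  define k where "k = length xs"
  have lk: "length ds = k" using less.prems homog_len k_def by metis
  have hh: "homog G (xs @ [y,z]) (ds @ [a,b])" using homog_append[OF less.prems(1), of "[y,z]" "[a,b]"] less.prems
    by (simp add: homog_def)
  have M: "M (xs @ [y,z]) \<in> G (sum_list ds + a + b)" using Mdeg[OF _ hh] by (simp add: add.assoc)
  have T: "T xs ds y z A \<in> G (sum_list ds + a + b)" if A: "A \<in> Pow {..<k} - {{..<k}}" for A
  proof -
    have Ak: "A \<subseteq> {..<k}" using A by auto
    have fA: "finite A" using Ak finite_subset by blast
    have cA: "card A < k" using A psubset_card_mono[of "{..<k}" A] by auto
    have hA: "homog G (sub xs A) (sub ds A)" using homog_sub[OF less.prems(1)] Ak k_def by simp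
    have "m (sub xs A @ [y,z]) \<in> G (sum_list (sub ds A) + a + b)"
      by (rule less.hyps[OF _ hA less.prems(2,3)]) (use cA length_sub[OF fA, of xs] k_def in simp)
    moreover have "homog G (sub xs ({..<k} - A)) (sub ds ({..<k} - A))"
      using homog_sub[OF less.prems(1)] k_def by auto
    ultimately have "homog G (sub xs ({..<k} - A) @ [m (sub xs A @ [y,z])])
                        (sub ds ({..<k} - A) @ [sum_list (sub ds A) + a + b])"
      unfolding homog_def by (intro list_all2_appendI) auto
    hence "M (sub xs ({..<k} - A) @ [m (sub xs A @ [y,z])]) \<in>
           G (sum_list (sub ds ({..<k} - A) @ [sum_list (sub ds A) + a + b]))"
      by (intro Mdeg) auto
    hence "M (sub xs ({..<k} - A) @ [m (sub xs A @ [y,z])]) \<in>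
           G (sum_list (sub ds ({..<k} - A)) + (sum_list (sub ds A) + a + b))" by simp
    moreover have "sum_list (sub ds ({..<k} - A)) + (sum_list (sub ds A) + a + b) = sum_list ds + a + b"
      using sum_list_split[of A ds] Ak lk by simp
    ultimately show ?thesis unfolding T_def k_def[symmetric] by (simp add: vs.subspace_scale subsp)
  qed
  have "m (xs @ [y,z]) = M (xs @ [y,z]) - sum (T xs ds y z) (Pow {..<k} - {{..<k}})"
    using R'[OF less.prems] k_def by simp
  moreover have "sum (T xs ds y z) (Pow {..<k} - {{..<k}}) \<in> G (sum_list ds + a + b)"
    by (rule vs.subspace_sum[OF subsp]) (use T in auto)
  ultimately show ?case using M by (simp add: vs.subspace_diff subsp)
qed

lemma m2_hom: "y \<in> G a \<Longrightarrow> z \<in> G b \<Longrightarrow> m [y, z] = M [y, z]"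
  using R'[of "[]" "[]" y a z b] by (simp add: homog_def)

lemma m2: "m [y, z] = M [y, z]"
proof -
  have "m ys = M ys" if "length ys = 2" for ys
  proof (rule extS[of "{0,1}" 2 m M "\<lambda>_. True"])
    show "m (ys[i := u + w]) = m (ys[i := u]) + m (ys[i := w])" if "i \<in> {0,1}" "length ys = 2" for i ys u w
      using that by (intro m_add) auto
    show "M (ys[i := u + w]) = M (ys[i := u]) + M (ys[i := w])" if "i \<in> {0,1}" "length ys = 2" for i ys u w
      using that by (intro M_add) auto
    show "m ys = M ys" if "length ys = 2" "\<forall>i\<in>{0,1}. \<exists>d. ys ! i \<in> G d" for ys
    proof -
      have "ys = [ys!0, ys!1]" using that(1) by (intro nth_equalityI) (auto simp: less_Suc_eq nth_Cons split: nat.splits)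
      then obtain y z where "ys = [y, z]" by blast
      thus ?thesis using that m2_hom by auto
    qed
  qed (use that in auto)
  thus ?thesis by simp
qed

lemma part1: "m [x, one] = x"
  using m2 Munit[of "[x]"] M1 by simp

lemma swap_hom:
  "homog G xs ds \<Longrightarrow> y \<in> G a \<Longrightarrow> z \<in> G b \<Longrightarrow>
   m (xs @ [y,z]) = scale (of_int (if odd (a*b) then -1 else 1)) (m (xs @ [z,y]))"
proof (induction "length xs" arbitrary: xs ds rule: less_induct)
  case less
  define k where "k = length xs"
  define e where "e = (of_int (if odd (a*b) then -1 else 1) :: 'k)"
  have lk: "length ds = k" using less.prems homog_len k_def by metis
  have hh: "homog G (xs @ [y,z]) (ds @ [a,b])" using homog_append[OF less.prems(1), of "[y,z]" "[a,b]"] less.prems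
    by (simp add: homog_def)
  have "M (xs @ [y,z]) = scale (of_int (koszul (ds @ [a,b]) ([0..<k] @ [Suc k, k])))
          (M (map ((!) (xs @ [y,z])) ([0..<k] @ [Suc k, k])))"
    by (rule Msym[OF _ hh]) (auto simp: k_def)
  moreover have "map ((!) (xs @ [y,z])) ([0..<k] @ [Suc k, k]) = xs @ [z,y]"
    unfolding k_def by (intro nth_equalityI) (auto simp: nth_append)
  ultimately have MM: "M (xs @ [y,z]) = scale e (M (xs @ [z,y]))"
    using kos_swap[of k ds a b] lk e_def by simp
  have TT: "T xs ds y z A = scale e (T xs ds z y A)" if A: "A \<in> Pow {..<k} - {{..<k}}" for A
  proof -
    have Ak: "A \<subseteq> {..<k}" using A by auto
    have fA: "finite A" using Ak finite_subset by blast
    have cA: "card A < k" using A psubset_card_mono[of "{..<k}" A] by auto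
    have hA: "homog G (sub xs A) (sub ds A)" using homog_sub[OF less.prems(1)] Ak k_def by simp
    have "m (sub xs A @ [y,z]) = scale e (m (sub xs A @ [z,y]))"
      unfolding e_def by (rule less.hyps[OF _ hA less.prems(2,3)]) (use cA length_sub[OF fA, of xs] k_def in simp)
    thus ?thesis unfolding T_def by (simp add: M_last_scale vs.scale_left_commute)
  qed
  have "m (xs @ [y,z]) = M (xs @ [y,z]) - sum (T xs ds y z) (Pow {..<k} - {{..<k}})"
    using R'[OF less.prems] k_def by simp
  also have "\<dots> = scale e (M (xs @ [z,y])) - scale e (sum (T xs ds z y) (Pow {..<k} - {{..<k}}))"
    using TT MM by (simp add: vs.scale_sum_right)
  also have "\<dots> = scale e (m (xs @ [z,y]))"
    using R'[OF less.prems(1,3,2)] k_def by (simp add: vs.scale_right_diff_distrib[symmetric])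
  finally show ?case unfolding e_def .
qed

end


definition rk :: "nat set \<Rightarrow> nat \<Rightarrow> nat" where
  "rk S x = the_inv_into {..<card S} ((!) (sl S)) x"

lemma perm_of:
  assumes "finite S" "distinct L" "set L = S"
  shows "distinct (map (rk S) L)" "set (map (rk S) L) = {..<card S}"
        "map ((!) (sl S)) (map (rk S) L) = L"
proof -
  have b: "bij_betw ((!) (sl S)) {..<card S} S"
    by (rule bij_betw_nth) (use assms in auto)
  have bi: "bij_betw (rk S) S {..<card S}" unfolding rk_def by (rule bij_betw_the_inv_into[OF b])
  show "distinct (map (rk S) L)" using bi assms
    by (simp add: distinct_map bij_betw_def)
  show "set (map (rk S) L) = {..<card S}" using bi assms by (simp add: bij_betw_def)
  have *: "sl S ! rk S x = x" if "x \<in> S" for x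
    unfolding rk_def by (rule f_the_inv_into_f_bij_betw[OF b]) (use that in auto)
  show "map ((!) (sl S)) (map (rk S) L) = L" unfolding map_map
    by (rule map_idI) (use * assms in auto)
qed

lemma perm_list_sl2:
  assumes "X \<subseteq> {..<k}"
  shows "distinct (sl ({..<k} - X) @ sl X)" "set (sl ({..<k} - X) @ sl X) = {..<k}"
proof -
  have f: "finite X" using assms finite_subset by blast
  show "distinct (sl ({..<k} - X) @ sl X)" using f by auto
  show "set (sl ({..<k} - X) @ sl X) = {..<k}" using f assms by auto
qed

context CA begin

lemma mdeg_sub:
  assumes h: "homog G xs ds" and y: "y \<in> G a" and z: "z \<in> G b" and A: "A \<subseteq> {..<length xs}"
  shows "homog G (sub xs ({..<length xs} - A) @ [m (sub xs A @ [y,z])])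
                 (sub ds ({..<length xs} - A) @ [sum_list (sub ds A) + a + b])"
proof -
  have "m (sub xs A @ [y,z]) \<in> G (sum_list (sub ds A) + a + b)"
    by (rule mdeg_aux[OF homog_sub[OF h A] y z])
  moreover have "homog G (sub xs ({..<length xs} - A)) (sub ds ({..<length xs} - A))"
    using homog_sub[OF h] by auto
  ultimately show ?thesis unfolding homog_def by (intro list_all2_appendI) auto
qed

lemma perm_hom:
  "homog G xs ds \<Longrightarrow> y \<in> G a \<Longrightarrow> z \<in> G b \<Longrightarrow> distinct P \<Longrightarrow> set P = {..<length xs} \<Longrightarrow>
   m (xs @ [y,z]) = scale (of_int (koszul ds P)) (m (map ((!) xs) P @ [y,z]))"
proof (induction "length xs" arbitrary: xs ds P rule: less_induct)
  case less
  note h = less.prems(1) and y = less.prems(2) and z = less.prems(3) and dP = less.prems(4)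
  define k where "k = length xs"
  have sP: "set P = {..<k}" using less.prems(5) k_def by simp
  have lk: "length ds = k" using h homog_len k_def by metis
  have lenP: "length P = k" using sP dP distinct_card by fastforce
  define xs' where "xs' = map ((!) xs) P"
  define ds' where "ds' = map ((!) ds) P"
  have lxs': "length xs' = k" unfolding xs'_def using lenP by simp
  have h': "homog G xs' ds'" unfolding homog_iff xs'_def ds'_def
    using h lenP sP k_def by (auto simp: homog_iff) (metis lessThan_iff nth_mem)
  have bP: "bij_betw ((!) P) {..<k} {..<k}" by (rule bij_betw_nth) (use dP lenP sP in auto)
  have injP: "inj_on ((!) P) {..<k}" using bP by (simp add: bij_betw_def)
  have imP: "(!) P ` {..<k} = {..<k}" using bP by (simp add: bij_betw_def)
  define \<kappa>P where "\<kappa>P = koszul ds P"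
  have hh: "homog G (xs @ [y,z]) (ds @ [a,b])" using homog_append[OF h, of "[y,z]" "[a,b]"] y z
    by (simp add: homog_def)
  have ul: "[length ds..<length ds + 2] = [k, Suc k]" using lk by (simp add: upt_rec)
  have sP2: "set (P @ [length ds..<length ds + 2]) = {..<length (xs @ [y,z])}"
  proof -
    have "{..<length (xs @ [y,z])} = insert k (insert (Suc k) {..<k})" using k_def by auto
    thus ?thesis unfolding ul using sP by auto
  qed
  have dP2: "distinct (P @ [length ds..<length ds + 2])" unfolding ul using dP sP by auto
  have "M (xs @ [y,z]) = scale (of_int (koszul (ds @ [a,b]) (P @ [length ds..<length ds + 2])))
          (M (map ((!) (xs @ [y,z])) (P @ [length ds..<length ds + 2])))"
    by (rule Msym[OF _ hh dP2 sP2]) simp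
  moreover have "koszul (ds @ [a,b]) (P @ [length ds..<length ds + 2]) = \<kappa>P"
    unfolding \<kappa>P_def by (rule kos_top) (use dP sP lk in auto)
  moreover have "map ((!) (xs @ [y,z])) (P @ [length ds..<length ds + 2]) = xs' @ [y,z]"
  proof -
    have "map ((!) (xs @ [y,z])) P = xs'" unfolding xs'_def using sP k_def by (auto simp: nth_append)
    thus ?thesis unfolding ul using k_def by (simp add: nth_append)
  qed
  ultimately have MM: "M (xs @ [y,z]) = scale (of_int \<kappa>P) (M (xs' @ [y,z]))" by simp
  have TT: "T xs ds y z ((!) P ` B) = scale (of_int \<kappa>P) (T xs' ds' y z B)"
    if B: "B \<in> Pow {..<k} - {{..<k}}" for B
  proof -
    define A where "A = (!) P ` B"
    define Bc where "Bc = {..<k} - B"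
    define Ac where "Ac = {..<k} - A"
    have Bk: "B \<subseteq> {..<k}" using B by auto
    have fB: "finite B" using Bk finite_subset by blast
    have Ak: "A \<subseteq> {..<k}" unfolding A_def using Bk imP by auto
    have fA: "finite A" using Ak finite_subset by blast
    have AcBc: "Ac = (!) P ` Bc" unfolding Ac_def Bc_def A_def
      using inj_on_image_set_diff[OF injP, of "{..<k}" B] Bk imP by auto
    have cAB: "card A = card B" unfolding A_def using card_image[OF inj_on_subset[OF injP Bk]] .
    have cA: "card A < k" using B cAB psubset_card_mono[of "{..<k}" B] by auto
    have fAc: "finite Ac" "finite Bc" unfolding Ac_def Bc_def by auto
    have cAc: "card Ac + card A = k" unfolding Ac_def using Ak fA card_mono[OF _ Ak]
      by (simp add: card_Diff_subset)
    define L1 where "L1 = map ((!) P) (sl Bc)"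
    define L2 where "L2 = map ((!) P) (sl B)"
    have injBc: "inj_on ((!) P) (set (sl Bc))" using injP fAc by (auto simp: Bc_def inj_on_def)
    have injB: "inj_on ((!) P) (set (sl B))" using inj_on_subset[OF injP Bk] fB by simp
    have dL1: "distinct L1" "set L1 = Ac" unfolding L1_def using injBc fAc AcBc by (auto simp: distinct_map)
    have dL2: "distinct L2" "set L2 = A" unfolding L2_def using injB fB A_def by (auto simp: distinct_map)
    define \<tau>1 where "\<tau>1 = map (rk Ac) L1"
    define \<tau>2 where "\<tau>2 = map (rk A) L2"
    have t1: "distinct \<tau>1" "set \<tau>1 = {..<card Ac}" "map ((!) (sl Ac)) \<tau>1 = L1"
      unfolding \<tau>1_def using perm_of[OF fAc(1) dL1] by auto
    have t2: "distinct \<tau>2" "set \<tau>2 = {..<card A}" "map ((!) (sl A)) \<tau>2 = L2"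
      unfolding \<tau>2_def using perm_of[OF fA dL2] by auto
    define w where "w = m (sub xs A @ [y,z])"
    define w' where "w' = m (sub xs' B @ [y,z])"
    define \<kappa>2 where "\<kappa>2 = koszul (sub ds A) \<tau>2"
    have hA: "homog G (sub xs A) (sub ds A)" using homog_sub[OF h] Ak k_def by simp
    have lsA: "length (sub xs A) = card A" using length_sub[OF fA] .
    have subB: "map ((!) (sub xs A)) \<tau>2 = sub xs' B"
    proof -
      have "map ((!) (sub xs A)) \<tau>2 = map (\<lambda>i. xs ! (sl A ! i)) \<tau>2"
        by (rule map_cong[OF refl]) (use t2(2) fA in \<open>simp add: sub_def\<close>)
      also have "\<dots> = map ((!) xs) (map ((!) (sl A)) \<tau>2)" by simp
      also have "\<dots> = map ((!) xs) L2" by (simp only: t2(3))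
      also have "\<dots> = map (\<lambda>j. xs ! (P ! j)) (sl B)" unfolding L2_def by simp
      also have "\<dots> = sub xs' B" unfolding sub_def
        by (rule map_cong[OF refl]) (use Bk fB lenP in \<open>auto simp: xs'_def\<close>)
      finally show ?thesis .
    qed
    have ww: "w = scale (of_int \<kappa>2) w'"
      unfolding w_def w'_def \<kappa>2_def subB[symmetric]
      by (rule less.hyps[OF _ hA y z t2(1)]) (use cA lsA t2 k_def in auto)
    define \<kappa>1 where "\<kappa>1 = koszul (sub ds Ac) \<tau>1"
    have hM: "homog G (sub xs Ac @ [w]) (sub ds Ac @ [sum_list (sub ds A) + a + b])"
      using mdeg_sub[OF h y z, of A] Ak k_def unfolding Ac_def w_def by simp
    have lsAc: "length (sub xs Ac) = card Ac" "length (sub ds Ac) = card Ac"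
      using length_sub[OF fAc(1)] by auto
    have "M (sub xs Ac @ [w]) = scale (of_int (koszul (sub ds Ac @ [sum_list (sub ds A) + a + b])
                 (\<tau>1 @ [length (sub ds Ac)..<length (sub ds Ac) + 1])))
            (M (map ((!) (sub xs Ac @ [w])) (\<tau>1 @ [length (sub ds Ac)..<length (sub ds Ac) + 1])))"
    proof (rule Msym[OF _ hM])
      have u: "[length (sub ds Ac)..<length (sub ds Ac) + 1] = [card Ac]" using lsAc by simp
      show "distinct (\<tau>1 @ [length (sub ds Ac)..<length (sub ds Ac) + 1])" unfolding u using t1(1,2) by simp
      show "set (\<tau>1 @ [length (sub ds Ac)..<length (sub ds Ac) + 1]) = {..<length (sub xs Ac @ [w])}"
        unfolding u using t1(2) lsAc(1) by (simp add: lessThan_Suc)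
    qed simp
    moreover have "koszul (sub ds Ac @ [sum_list (sub ds A) + a + b])
                 (\<tau>1 @ [length (sub ds Ac)..<length (sub ds Ac) + 1]) = \<kappa>1"
      unfolding \<kappa>1_def by (rule kos_top) (use t1(1,2) lsAc(2) in simp_all)
    moreover have "map ((!) (sub xs Ac @ [w])) (\<tau>1 @ [length (sub ds Ac)..<length (sub ds Ac) + 1])
                    = sub xs' Bc @ [w]"
    proof -
      have "map ((!) (sub xs Ac @ [w])) \<tau>1 = map ((!) (sub xs Ac)) \<tau>1"
        by (rule map_cong[OF refl]) (use t1(2) lsAc in \<open>simp add: nth_append\<close>)
      also have "\<dots> = map (\<lambda>i. xs ! (sl Ac ! i)) \<tau>1"
        by (rule map_cong[OF refl]) (use t1(2) fAc in \<open>simp add: sub_def\<close>)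
      also have "\<dots> = map ((!) xs) (map ((!) (sl Ac)) \<tau>1)" by simp
      also have "\<dots> = map ((!) xs) L1" by (simp only: t1(3))
      also have "\<dots> = map (\<lambda>j. xs ! (P ! j)) (sl Bc)" unfolding L1_def by simp
      also have "\<dots> = sub xs' Bc" unfolding sub_def
        by (rule map_cong[OF refl]) (use fAc lenP in \<open>auto simp: xs'_def Bc_def\<close>)
      finally show ?thesis using lsAc by (simp add: nth_append)
    qed
    ultimately have MA: "M (sub xs Ac @ [w]) = scale (of_int (\<kappa>1 * \<kappa>2)) (M (sub xs' Bc @ [w']))"
      using ww by (simp add: M_last_scale)
    define \<kappa>A where "\<kappa>A = koszul ds (sl Ac @ sl A)"
    define \<kappa>B where "\<kappa>B = koszul ds' (sl Bc @ sl B)"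
    have LA: "distinct (sl Ac @ sl A)" "set (sl Ac @ sl A) = {..<k}"
      using perm_list_sl2[OF Ak] unfolding Ac_def by auto
    have LB: "distinct (sl Bc @ sl B)" "set (sl Bc @ sl B) = {..<k}"
      using perm_list_sl2[OF Bk] unfolding Bc_def by auto
    have c1: "koszul ds (map ((!) P) (sl Bc @ sl B)) = \<kappa>P * \<kappa>B"
      unfolding \<kappa>P_def \<kappa>B_def ds'_def by (rule kos_cocycle[OF dP sP LB])
    define Tl where "Tl = \<tau>1 @ map (\<lambda>i. i + length (sub ds Ac)) \<tau>2"
    have im: "(\<lambda>i. i + card Ac) ` {..<card A} = {card Ac..<card Ac + card A}"
    proof
      show "(\<lambda>i. i + card Ac) ` {..<card A} \<subseteq> {card Ac..<card Ac + card A}" by auto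
      show "{card Ac..<card Ac + card A} \<subseteq> (\<lambda>i. i + card Ac) ` {..<card A}"
      proof
        fix x assume "x \<in> {card Ac..<card Ac + card A}"
        thus "x \<in> (\<lambda>i. i + card Ac) ` {..<card A}" by (intro image_eqI[of _ _ "x - card Ac"]) auto
      qed
    qed
    have dTl: "distinct Tl" "set Tl = {..<k}" unfolding Tl_def
    proof -
      show "distinct (\<tau>1 @ map (\<lambda>i. i + length (sub ds Ac)) \<tau>2)"
        using t1(1,2) t2(1,2) lsAc(2) by (auto simp: distinct_map inj_on_def)
      have "set (\<tau>1 @ map (\<lambda>i. i + length (sub ds Ac)) \<tau>2) = {..<card Ac} \<union> {card Ac..<card Ac + card A}"
        using t1(2) t2(2) lsAc(2) im by simp
      also have "\<dots> = {..<k}" using cAc by auto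
      finally show "set (\<tau>1 @ map (\<lambda>i. i + length (sub ds Ac)) \<tau>2) = {..<k}" .
    qed
    have c2: "koszul ds (map ((!) (sl Ac @ sl A)) Tl) = \<kappa>A * koszul (map ((!) ds) (sl Ac @ sl A)) Tl"
      unfolding \<kappa>A_def by (rule kos_cocycle[OF LA dTl])
    have c3: "koszul (map ((!) ds) (sl Ac @ sl A)) Tl = \<kappa>1 * \<kappa>2"
    proof -
      have "map ((!) ds) (sl Ac @ sl A) = sub ds Ac @ sub ds A" by (simp add: sub_def)
      moreover have "koszul (sub ds Ac @ sub ds A) Tl = \<kappa>1 * \<kappa>2"
        unfolding Tl_def \<kappa>1_def \<kappa>2_def
        by (rule kos_block) (use t1 t2 lsAc length_sub[OF fA, of ds] in auto)
      ultimately show ?thesis by simp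
    qed
    have c4: "map ((!) (sl Ac @ sl A)) Tl = map ((!) P) (sl Bc @ sl B)"
    proof -
      have l: "length (sl Ac) = length (sub ds Ac)" unfolding sub_def by simp
      have e1: "map ((!) (sl Ac @ sl A)) \<tau>1 = map ((!) (sl Ac)) \<tau>1"
        by (rule map_cong[OF refl]) (use t1(2) l lsAc(2) in \<open>simp add: nth_append\<close>)
      have e2: "map ((!) (sl Ac @ sl A)) (map (\<lambda>i. i + length (sub ds Ac)) \<tau>2) = map ((!) (sl A)) \<tau>2"
        unfolding map_map by (rule map_cong[OF refl]) (use l in \<open>simp add: nth_append\<close>)
      have "map ((!) (sl Ac @ sl A)) Tl = map ((!) (sl Ac @ sl A)) \<tau>1 @ map ((!) (sl Ac @ sl A)) (map (\<lambda>i. i + length (sub ds Ac)) \<tau>2)"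
        unfolding Tl_def by (simp only: map_append)
      also have "\<dots> = L1 @ L2" unfolding e1 e2 t1(3) t2(3) ..
      finally show ?thesis unfolding L1_def L2_def by simp
    qed
    have sgn: "\<kappa>A * (\<kappa>1 * \<kappa>2) = \<kappa>P * \<kappa>B" using c1 c2 c3 c4 by simp
    have "T xs ds y z A = scale (of_int \<kappa>A) (M (sub xs Ac @ [w]))"
      unfolding T_def \<kappa>A_def Ac_def w_def k_def ..
    also have "\<dots> = scale (of_int (\<kappa>P * \<kappa>B)) (M (sub xs' Bc @ [w']))"
      by (simp only: MA vs.scale_scale of_int_mult[symmetric] sgn)
    also have "\<dots> = scale (of_int \<kappa>P) (T xs' ds' y z B)"
      unfolding T_def \<kappa>B_def Bc_def w'_def lxs' by simp
    finally show ?thesis unfolding A_def .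
  qed
  have bPow: "bij_betw (image ((!) P)) (Pow {..<k} - {{..<k}}) (Pow {..<k} - {{..<k}})"
  proof -
    have b1: "bij_betw (image ((!) P)) (Pow {..<k}) (Pow {..<k})" by (rule bij_betw_Pow[OF bP])
    have "bij_betw (image ((!) P)) (Pow {..<k} - {{..<k}}) (Pow {..<k} - {image ((!) P) {..<k}})"
      by (rule bij_betw_DiffI[OF b1]) (auto simp: bij_betw_def imP)
    thus ?thesis using imP by simp
  qed
  have "M (xs @ [y,z]) = m (xs @ [y,z]) + sum (T xs ds y z) (Pow {..<k} - {{..<k}})"
    using R'[OF h y z] k_def by simp
  also have "sum (T xs ds y z) (Pow {..<k} - {{..<k}}) = sum (\<lambda>B. T xs ds y z ((!) P ` B)) (Pow {..<k} - {{..<k}})"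
    by (rule sum.reindex_bij_betw[OF bPow, symmetric])
  also have "\<dots> = scale (of_int \<kappa>P) (sum (T xs' ds' y z) (Pow {..<k} - {{..<k}}))"
    using TT by (simp add: vs.scale_sum_right)
  finally have e1: "M (xs @ [y,z]) = m (xs @ [y,z]) + scale (of_int \<kappa>P) (sum (T xs' ds' y z) (Pow {..<k} - {{..<k}}))" .
  have e2: "M (xs' @ [y,z]) = m (xs' @ [y,z]) + sum (T xs' ds' y z) (Pow {..<k} - {{..<k}})"
    using R'[OF h' y z] lxs' by simp
  have "m (xs @ [y,z]) = scale (of_int \<kappa>P) (m (xs' @ [y,z]))"
    using e1 e2 MM by (simp add: vs.scale_right_distrib)
  thus ?case unfolding \<kappa>P_def xs'_def .
qed

end


lemma kos_ins0:
  assumes X: "X \<subseteq> {..<k}" and l: "length es = k"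
  shows "koszul (es @ [0]) (sl ({..<k} - X) @ [k] @ sl X) = koszul es (sl ({..<k} - X) @ sl X)"
proof -
  have fX: "finite X" using X finite_subset by blast
  let ?Xc = "{..<k} - X"
  have d: "distinct ((sl ?Xc @ [k]) @ sl X)" using fX X by auto
  have s1: "koszul (es @ [0]) (sl ?Xc @ [k]) = 1"
    by (rule kos_sorted) (auto simp: sorted_append less_imp_le)
  have s2: "koszul (es @ [0]) (sl X) = 1" by (rule kos_sorted) (use fX in auto)
  have cr: "CR (es @ [0]) (set (sl ?Xc @ [k])) (set (sl X)) = CR es ?Xc X"
    unfolding CR_def using fX X l by (auto simp: nth_append)
  have "koszul (es @ [0]) (sl ?Xc @ [k] @ sl X) = (-1) ^ card (CR es ?Xc X)"
    using kos_append[OF d, of "es @ [0]"] s1 s2 cr by simp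
  also have "\<dots> = koszul es (sl ?Xc @ sl X)"
    by (rule kos_sl2[symmetric]) (use fX in auto)
  finally show ?thesis .
qed

lemma homog_exists: "(\<And>i. i < length ys \<Longrightarrow> \<exists>d. ys!i \<in> G d) \<Longrightarrow> \<exists>ds. homog G ys ds"
proof -
  assume h: "\<And>i. i < length ys \<Longrightarrow> \<exists>d. ys!i \<in> G d"
  define ds where "ds = map (\<lambda>i. SOME d. ys!i \<in> G d) [0..<length ys]"
  have "homog G ys ds" unfolding homog_iff ds_def
    using h by (auto intro: someI_ex)
  thus ?thesis by blast
qed

context CA begin

lemma M_remove_one:
  assumes hU: "homog G U D" and hV: "homog G V E" and ne: "U @ V \<noteq> []"
  shows "M (U @ one # V) = M (U @ V)"
proof -
  define c where "c = length U"
  define xs where "xs = U @ one # V"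
  define ds where "ds = D @ 0 # E"
  have h: "homog G xs ds" unfolding xs_def ds_def
    using homog_append[OF hU, of "one # V" "0 # E"] hV one_G by (simp add: homog_def)
  have lU: "length D = c" using hU homog_len c_def by metis
  have lx: "length xs = length ds" using h homog_len by metis
  have cl: "c < length xs" unfolding xs_def c_def by simp
  define ps where "ps = [0..<c] @ [Suc c..<length xs] @ [c]"
  have dps: "distinct ps" unfolding ps_def by auto
  have sps: "set ps = {..<length xs}" unfolding ps_def using cl by auto
  have "M xs = scale (of_int (koszul ds ps)) (M (map ((!) xs) ps))"
    by (rule Msym[OF _ h dps sps]) (simp add: xs_def)
  moreover have "koszul ds ps = 1" unfolding ps_def lx
    by (rule kos_move) (use cl lx lU in \<open>auto simp: ds_def nth_append\<close>)
  moreover have "map ((!) xs) ps = (U @ V) @ [one]"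
  proof -
    have "map ((!) xs) [0..<c] = U" unfolding xs_def c_def
      by (rule nth_equalityI) (auto simp: nth_append)
    moreover have "map ((!) xs) [Suc c..<length xs] = V"
    proof (rule nth_equalityI)
      have lxs: "length xs = Suc c + length V" by (simp only: xs_def c_def length_append length_Cons)
      show "length (map ((!) xs) [Suc c..<length xs]) = length V" unfolding lxs by (simp only: length_map length_upt diff_add_inverse)
      fix i assume "i < length (map ((!) xs) [Suc c..<length xs])"
      hence i: "i < length V" unfolding lxs by (simp only: length_map length_upt diff_add_inverse)
      have "map ((!) xs) [Suc c..<length xs] ! i = xs ! (Suc c + i)"
        using i unfolding lxs by (simp del: upt_Suc)
      also have "\<dots> = V ! i" unfolding xs_def c_def by (simp add: nth_append)
      finally show "map ((!) xs) [Suc c..<length xs] ! i = V ! i" .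
    qed
    moreover have "xs ! c = one" unfolding xs_def c_def by simp
    ultimately show ?thesis unfolding ps_def by simp
  qed
  ultimately show ?thesis using Munit[OF ne] by (simp add: xs_def)
qed

lemma unit_hom:
  "homog G xs ds \<Longrightarrow> 3 \<le> length xs \<Longrightarrow> j < length xs \<Longrightarrow> xs!j = one \<Longrightarrow> m xs = 0"
proof (induction "length xs" arbitrary: xs ds j rule: less_induct)
  case less
  note IH = less.hyps
  define k where "k = length xs - 2"
  have k1: "1 \<le> k" using less.prems(2) k_def by simp
  define ys where "ys = take k xs"
  define y where "y = xs ! k"
  define z where "z = xs ! Suc k"
  define es where "es = take k ds"
  define a where "a = ds ! k"
  define b where "b = ds ! Suc k"
  have lxd: "length ds = length xs" using less.prems(1) homog_len by metis
  have xs_eq: "xs = ys @ [y, z]"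
  proof -
    have lx: "length xs = Suc (Suc k)" using k_def less.prems(2) by simp
    have "drop k xs = xs ! k # drop (Suc k) xs" by (rule Cons_nth_drop_Suc[symmetric]) (use lx in simp)
    also have "drop (Suc k) xs = xs ! Suc k # drop (Suc (Suc k)) xs" by (rule Cons_nth_drop_Suc[symmetric]) (use lx in simp)
    also have "drop (Suc (Suc k)) xs = []" using lx by simp
    finally have "drop k xs = [y, z]" unfolding y_def z_def .
    thus ?thesis unfolding ys_def by (metis append_take_drop_id)
  qed
  have lys: "length ys = k" unfolding ys_def using k_def by simp
  have hys: "homog G ys es" unfolding ys_def es_def using less.prems(1) lxd
    by (auto simp: homog_iff)
  have ya: "y \<in> G a" unfolding y_def a_def using homog_nth[OF less.prems(1)] k_def less.prems(2) by simp
  have zb: "z \<in> G b" unfolding z_def b_def using homog_nth[OF less.prems(1)] k_def less.prems(2) by simp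
  have caseA: "m (ys0 @ [y0, one]) = 0" if h0: "homog G ys0 es0" "length ys0 = k" "y0 \<in> G a0" for ys0 es0 y0 a0
  proof -
    have T0: "T ys0 es0 y0 one A = 0" if A: "A \<in> Pow {..<k} - {{..<k}} - {{}}" for A
    proof -
      have Ak: "A \<subseteq> {..<k}" using A by auto
      have fA: "finite A" using Ak finite_subset by blast
      have cA: "card A < k" using A psubset_card_mono[of "{..<k}" A] by auto
      have cA1: "card A \<noteq> 0" using A fA by auto
      have hA: "homog G (sub ys0 A @ [y0, one]) (sub es0 A @ [a0, 0])"
        using homog_append[OF homog_sub[OF h0(1)], of A "[y0,one]" "[a0,0]"] Ak h0 one_G
        by (simp add: homog_def)
      have ls: "length (sub ys0 A) = card A" using length_sub[OF fA] .
      have "m (sub ys0 A @ [y0, one]) = 0"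
        by (rule IH[OF _ hA, of "Suc (card A)"]) (use ls cA cA1 k_def less.prems(2) in \<open>auto simp: nth_append\<close>)
      thus ?thesis unfolding T_def by (simp add: M_last_zero)
    qed
    have Te: "T ys0 es0 y0 one {} = M (ys0 @ [y0])"
    proof -
      have "koszul es0 [0..<k] = 1" by (rule kos_sorted) auto
      thus ?thesis unfolding T_def using h0(2) sub_all[of ys0] part1
        by (simp add: sl_lessThan)
    qed
    have "0 \<in> {..<k}" using k1 by simp
    hence em: "{} \<in> Pow {..<k} - {{..<k}}" by blast
    have "sum (T ys0 es0 y0 one) (Pow {..<k} - {{..<k}}) = T ys0 es0 y0 one {} + sum (T ys0 es0 y0 one) (Pow {..<k} - {{..<k}} - {{}})"
      by (rule sum.remove[OF _ em]) simp
    also have "sum (T ys0 es0 y0 one) (Pow {..<k} - {{..<k}} - {{}}) = 0"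
      by (rule sum.neutral) (use T0 in blast)
    finally have "M (ys0 @ [y0, one]) = m (ys0 @ [y0, one]) + M (ys0 @ [y0])"
      using R'[OF h0(1,3) one_G] h0(2) Te by simp
    moreover have "M (ys0 @ [y0, one]) = M (ys0 @ [y0])" using Munit[of "ys0 @ [y0]"] by simp
    ultimately show ?thesis by simp
  qed
  have caseC: "m (ys' @ [one, y0, z0]) = 0"
    if h0: "homog G ys' es'" "Suc (length ys') = k" "y0 \<in> G a0" "z0 \<in> G b0" for ys' es' y0 a0 z0 b0
  proof -
    define k' where "k' = length ys'"
    have lk': "length es' = k'" using h0(1) homog_len k'_def by metis
    define Y where "Y = ys' @ [one]"
    define E where "E = es' @ [0]"
    have hY: "homog G Y E" unfolding Y_def E_def using homog_append[OF h0(1), of "[one]" "[0]"] one_G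
      by (simp add: homog_def)
    have lY: "length Y = Suc k'" unfolding Y_def k'_def by simp
    have kk: "k = Suc k'" using h0(2) k'_def by simp
    have Pw: "Pow {..<Suc k'} - {{..<Suc k'}} = Pow {..<k'} \<union> insert k' ` (Pow {..<k'} - {{..<k'}})"
    proof
      show "Pow {..<Suc k'} - {{..<Suc k'}} \<subseteq> Pow {..<k'} \<union> insert k' ` (Pow {..<k'} - {{..<k'}})"
      proof
        fix A assume A: "A \<in> Pow {..<Suc k'} - {{..<Suc k'}}"
        show "A \<in> Pow {..<k'} \<union> insert k' ` (Pow {..<k'} - {{..<k'}})"
        proof (cases "k' \<in> A")
          case True
          have "A - {k'} \<in> Pow {..<k'} - {{..<k'}}"
          proof -
            have "A - {k'} \<subseteq> {..<k'}" using A by auto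
            moreover have "A - {k'} \<noteq> {..<k'}"
            proof
              assume "A - {k'} = {..<k'}"
              hence "A = {..<Suc k'}" using True by (auto simp: lessThan_Suc)
              thus False using A by auto
            qed
            ultimately show ?thesis by auto
          qed
          moreover have "A = insert k' (A - {k'})" using True by auto
          ultimately show ?thesis by blast
        next
          case False
          hence "A \<subseteq> {..<k'}" using A by (auto simp: less_Suc_eq)
          thus ?thesis by auto
        qed
      qed
      show "Pow {..<k'} \<union> insert k' ` (Pow {..<k'} - {{..<k'}}) \<subseteq> Pow {..<Suc k'} - {{..<Suc k'}}"
      proof
        fix A assume "A \<in> Pow {..<k'} \<union> insert k' ` (Pow {..<k'} - {{..<k'}})"
        then consider "A \<subseteq> {..<k'}" | X where "X \<subseteq> {..<k'}" "X \<noteq> {..<k'}" "A = insert k' X" by auto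
        thus "A \<in> Pow {..<Suc k'} - {{..<Suc k'}}"
        proof cases
          case 1 thus ?thesis by auto
        next
          case 2
          have "A \<subseteq> {..<Suc k'}" using 2 by auto
          moreover have "A \<noteq> {..<Suc k'}"
          proof
            assume "A = {..<Suc k'}"
            hence "X = {..<k'}" using 2 by (auto simp: lessThan_Suc)
            thus False using 2 by simp
          qed
          ultimately show ?thesis by auto
        qed
      qed
    qed
    have disj: "Pow {..<k'} \<inter> insert k' ` (Pow {..<k'} - {{..<k'}}) = {}"
    proof (rule equals0I)
      fix A assume A: "A \<in> Pow {..<k'} \<inter> insert k' ` (Pow {..<k'} - {{..<k'}})"
      hence "k' \<in> A" by blast
      moreover have "A \<subseteq> {..<k'}" using A by blast
      ultimately show False by blast
    qed
    have inj: "inj_on (insert k') (Pow {..<k'} - {{..<k'}})"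
    proof (rule inj_onI)
      fix X X' assume X: "X \<in> Pow {..<k'} - {{..<k'}}" and X': "X' \<in> Pow {..<k'} - {{..<k'}}"
        and e: "insert k' X = insert k' X'"
      have "k' \<notin> X" "k' \<notin> X'" using X X' by auto
      hence "X = insert k' X - {k'}" "X' = insert k' X' - {k'}" by auto
      thus "X = X'" using e by simp
    qed
    have T2: "T Y E y0 z0 (insert k' X) = 0" if X: "X \<in> Pow {..<k'} - {{..<k'}}" for X
    proof -
      have Xk: "X \<subseteq> {..<k'}" using X by auto
      have fX: "finite X" using Xk finite_subset by blast
      have cX: "card X < k'" using X psubset_card_mono[of "{..<k'}" X] by auto
      have sX: "sl (insert k' X) = sl X @ [k']"
      proof -
        have "sl (X \<union> {k'}) = sl X @ sl {k'}" by (rule sl_union) (use fX Xk in auto)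
        thus ?thesis by simp
      qed
      have sub2: "sub Y (insert k' X) = sub ys' X @ [one]"
        unfolding sub_def sX Y_def using Xk fX k'_def by (auto simp: nth_append)
      have hL: "homog G (sub ys' X @ [one, y0, z0]) (sub es' X @ [0, a0, b0])"
        using homog_append[OF homog_sub[OF h0(1)], of X "[one,y0,z0]" "[0,a0,b0]"] Xk h0 one_G k'_def
        by (simp add: homog_def)
      have ls: "length (sub ys' X) = card X" using length_sub[OF fX] .
      have "m (sub ys' X @ [one, y0, z0]) = 0"
        by (rule IH[OF _ hL, of "card X"]) (use ls cX kk k_def less.prems(2) in \<open>auto simp: nth_append\<close>)
      thus ?thesis unfolding T_def sub2 by (simp add: M_last_zero)
    qed
    have T1: "T Y E y0 z0 A = T ys' es' y0 z0 A" if A: "A \<in> Pow {..<k'}" for A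
    proof -
      have Ak: "A \<subseteq> {..<k'}" using A by auto
      have fA: "finite A" using Ak finite_subset by blast
      have c: "{..<length Y} - A = ({..<k'} - A) \<union> {k'}" using lY Ak by auto
      have sc: "sl ({..<length Y} - A) = sl ({..<k'} - A) @ [k']"
      proof -
        have "sl (({..<k'} - A) \<union> {k'}) = sl ({..<k'} - A) @ sl {k'}" by (rule sl_union) auto
        thus ?thesis unfolding c by simp
      qed
      have s1: "sub Y ({..<length Y} - A) = sub ys' ({..<k'} - A) @ [one]"
        unfolding sub_def sc unfolding Y_def using k'_def by (auto simp: nth_append)
      have s2: "sub Y A = sub ys' A" unfolding Y_def by (rule sub_append_small) (use Ak k'_def in auto)
      have kz: "koszul E (sl ({..<length Y} - A) @ sl A) = koszul es' (sl ({..<k'} - A) @ sl A)"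
        unfolding sc E_def using kos_ins0[OF Ak lk'] by simp
      have hw: "homog G [m (sub ys' A @ [y0, z0])] [sum_list (sub es' A) + a0 + b0]"
        using mdeg_aux[OF homog_sub[OF h0(1)] h0(3,4), of A] Ak k'_def by (simp add: homog_def)
      have hU: "homog G (sub ys' ({..<k'} - A)) (sub es' ({..<k'} - A))"
        using homog_sub[OF h0(1)] k'_def by auto
      have "M (sub ys' ({..<k'} - A) @ one # [m (sub ys' A @ [y0, z0])]) = M (sub ys' ({..<k'} - A) @ [m (sub ys' A @ [y0, z0])])"
        by (rule M_remove_one[OF hU hw]) simp
      thus ?thesis unfolding T_def s1 s2 kz using lY k'_def by simp
    qed
    have "sum (T Y E y0 z0) (Pow {..<length Y} - {{..<length Y}}) =
          sum (T Y E y0 z0) (Pow {..<k'}) + sum (T Y E y0 z0) (insert k' ` (Pow {..<k'} - {{..<k'}}))"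
      unfolding lY Pw by (rule sum.union_disjoint[OF _ _ disj]) auto
    also have "sum (T Y E y0 z0) (insert k' ` (Pow {..<k'} - {{..<k'}})) = 0"
      by (simp add: sum.reindex[OF inj] T2)
    also have "sum (T Y E y0 z0) (Pow {..<k'}) = sum (T ys' es' y0 z0) (Pow {..<k'})"
      by (rule sum.cong[OF refl]) (rule T1)
    also have "\<dots> = M (ys' @ [y0, z0])" using R[OF h0(1,3,4)] k'_def by simp
    finally have "M (Y @ [y0, z0]) = m (Y @ [y0, z0]) + M (ys' @ [y0, z0])"
      using R'[OF hY h0(3,4)] by simp
    moreover have "M (Y @ [y0, z0]) = M (ys' @ [y0, z0])"
      unfolding Y_def using M_remove_one[OF h0(1), of "[y0, z0]" "[a0, b0]"] h0(3,4)
      by (simp add: homog_def)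
    ultimately show ?thesis unfolding Y_def by simp
  qed
  have jl: "j < Suc (Suc k)" using less.prems(3) k_def less.prems(2) by simp
  consider "j = Suc k" | "j = k" | "j < k" using jl by linarith
  thus ?case
  proof cases
    case 1
    hence "z = one" using less.prems(4) xs_eq lys by (simp add: nth_append)
    thus ?thesis using caseA[OF hys lys ya] xs_eq by simp
  next
    case 2
    hence "y = one" using less.prems(4) xs_eq lys by (simp add: nth_append)
    moreover have "m (ys @ [one, z]) = scale (of_int (if odd (0 * b) then -1 else 1)) (m (ys @ [z, one]))"
      by (rule swap_hom[OF hys one_G zb])
    ultimately show ?thesis using caseA[OF hys lys zb] xs_eq by simp
  next
    case 3
    have yj: "ys ! j = one" using less.prems(4) xs_eq lys 3 by (simp add: nth_append)
    define \<sigma> where "\<sigma> = (\<lambda>i. if i = j then k - 1 else if i = k - 1 then j else i)"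
    define Pl where "Pl = map \<sigma> [0..<k]"
    have inj\<sigma>: "inj_on \<sigma> {..<k}" unfolding \<sigma>_def inj_on_def using 3 by auto
    have dPl: "distinct Pl" unfolding Pl_def using inj\<sigma> by (simp add: distinct_map lessThan_atLeast0)
    have sPl: "set Pl = {..<length ys}"
    proof -
      have "\<sigma> ` {..<k} = {..<k}"
      proof
        show "\<sigma> ` {..<k} \<subseteq> {..<k}" unfolding \<sigma>_def using 3 by auto
        show "{..<k} \<subseteq> \<sigma> ` {..<k}"
        proof
          fix x assume x: "x \<in> {..<k}"
          have "\<sigma> (\<sigma> x) = x" unfolding \<sigma>_def by auto
          moreover have "\<sigma> x \<in> {..<k}" unfolding \<sigma>_def using x 3 by auto
          ultimately show "x \<in> \<sigma> ` {..<k}" by (metis imageI)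
        qed
      qed
      thus ?thesis unfolding Pl_def lys by (simp add: lessThan_atLeast0)
    qed
    have "m (ys @ [y, z]) = scale (of_int (koszul es Pl)) (m (map ((!) ys) Pl @ [y, z]))"
      by (rule perm_hom[OF hys ya zb dPl sPl])
    moreover have "m (map ((!) ys) Pl @ [y, z]) = 0"
    proof -
      define ys1 where "ys1 = map ((!) ys) Pl"
      define es1 where "es1 = map ((!) es) Pl"
      have lPl: "length Pl = k" unfolding Pl_def by simp
      have h1: "homog G ys1 es1" unfolding ys1_def es1_def homog_iff
        using hys lys lPl sPl by (auto simp: homog_iff)
      have l1: "length ys1 = k" unfolding ys1_def using lPl by simp
      have last1: "ys1 ! (k - 1) = one"
      proof -
        have "Pl ! (k - 1) = j" unfolding Pl_def \<sigma>_def using k1 by simp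
        thus ?thesis unfolding ys1_def using lPl k1 yj by simp
      qed
      have eq1: "ys1 = take (k - 1) ys1 @ [one]"
      proof -
        have "drop (k - 1) ys1 = ys1 ! (k - 1) # drop (Suc (k - 1)) ys1"
          by (rule Cons_nth_drop_Suc[symmetric]) (use l1 k1 in simp)
        also have "drop (Suc (k - 1)) ys1 = []" using l1 k1 by simp
        finally have "drop (k - 1) ys1 = [one]" using last1 by simp
        thus ?thesis by (metis append_take_drop_id)
      qed
      have h2: "homog G (take (k - 1) ys1) (take (k - 1) es1)" using h1 by (auto simp: homog_iff)
      have f1: "m (take (k - 1) ys1 @ [one, y, z]) = 0"
        by (rule caseC[OF h2 _ ya zb]) (use l1 k1 in simp)
      have f2: "take (k - 1) ys1 @ [one, y, z] = ys1 @ [y, z]" using eq1 by (metis append.assoc append_Cons append_Nil)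
      have "m (ys1 @ [y, z]) = 0" using f1 f2 by metis
      thus ?thesis unfolding ys1_def .
    qed
    ultimately show ?thesis using xs_eq by simp
  qed
qed

end


context CA begin

lemma part2: "3 \<le> length xs \<Longrightarrow> j < length xs \<Longrightarrow> xs ! j = one \<Longrightarrow> m xs = 0"
proof -
  assume n3: "3 \<le> length xs" and j: "j < length xs" and xj: "xs ! j = one"
  show "m xs = 0"
  proof (rule extS[where S="{..<length xs} - {j}" and n="length xs" and F=m and H="\<lambda>_. 0"
               and Q="\<lambda>ys. ys ! j = one"])
    show "m (ys[i := u + w]) = m (ys[i := u]) + m (ys[i := w])"
      if "i \<in> {..<length xs} - {j}" "length ys = length xs" for i ys u w
      by (rule m_add) (use that n3 in auto)
    show "m ys = 0" if "length ys = length xs" "\<forall>i\<in>{..<length xs} - {j}. \<exists>d. ys ! i \<in> G d"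
      "ys ! j = one" for ys
    proof -
      have "\<exists>d. ys ! i \<in> G d" if "i < length ys" for i
        using that \<open>\<forall>i\<in>_. _\<close> \<open>ys ! j = one\<close> \<open>length ys = length xs\<close> one_G by (cases "i = j") auto
      then obtain ds where "homog G ys ds" using homog_exists by blast
      thus ?thesis by (rule unit_hom[of ys ds j]) (use that n3 j in auto)
    qed
    show "ys[i := v] ! j = one" if "i \<in> {..<length xs} - {j}" "ys ! j = one" for i ys v
      using that by auto
  qed (use xj in auto)
qed

lemma part3: "y \<in> G a \<Longrightarrow> z \<in> G b \<Longrightarrow>
    m (xs @ [y, z]) = scale (if odd (a * b) then -1 else 1) (m (xs @ [z, y]))"
proof -
  assume y: "y \<in> G a" and z: "z \<in> G b"
  define e where "e = (if odd (a * b) then -1 else 1 :: 'k)"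
  have e': "of_int (if odd (a*b) then -1 else 1) = e" unfolding e_def by simp
  have upd: "(ws @ [p, q])[i := v] = ws[i := v] @ [p, q]" if "i < length ws" for ws p q i v
    using that by (simp add: list_update_append1)
  have "m (xs @ [y, z]) = scale e (m (xs @ [z, y]))"
  proof (rule extS[where S="{..<length xs}" and n="length xs" and F="\<lambda>ws. m (ws @ [y, z])"
               and H="\<lambda>ws. scale e (m (ws @ [z, y]))" and Q="\<lambda>_. True"])
    show "m (ys[i := u + w] @ [y, z]) = m (ys[i := u] @ [y, z]) + m (ys[i := w] @ [y, z])"
      if "i \<in> {..<length xs}" "length ys = length xs" for i ys u w
      using m_add[of "ys @ [y, z]" i u w] upd[of i ys] that by simp
    show "scale e (m (ys[i := u + w] @ [z, y])) = scale e (m (ys[i := u] @ [z, y])) + scale e (m (ys[i := w] @ [z, y]))"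
      if "i \<in> {..<length xs}" "length ys = length xs" for i ys u w
      using m_add[of "ys @ [z, y]" i u w] upd[of i ys] that by (simp add: vs.scale_right_distrib)
    show "m (ys @ [y, z]) = scale e (m (ys @ [z, y]))"
      if "length ys = length xs" "\<forall>i\<in>{..<length xs}. \<exists>d. ys ! i \<in> G d" for ys
    proof -
      have "\<exists>d. ys ! i \<in> G d" if "i < length ys" for i using that \<open>length ys = length xs\<close> \<open>\<forall>i\<in>_. _\<close> by auto
      then obtain ds where "homog G ys ds" using homog_exists by blast
      thus ?thesis using swap_hom[OF _ y z] e' by simp
    qed
  qed auto
  thus ?thesis unfolding e_def .
qed

lemma part4: "2 \<le> length xs \<Longrightarrow> homog G xs ds \<Longrightarrow> \<sigma> permutes {..<length xs} \<Longrightarrow>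
   m (xs @ [y, z]) = scale (of_int (koszul ds (map \<sigma> [0..<length xs])))
                                (m (map (\<lambda>i. xs ! \<sigma> i) [0..<length xs] @ [y, z]))"
proof -
  assume h: "homog G xs ds" and s: "\<sigma> permutes {..<length xs}"
  define P where "P = map \<sigma> [0..<length xs]"
  define \<kappa> where "\<kappa> = (of_int (koszul ds P) :: 'k)"
  have dP: "distinct P" unfolding P_def using permutes_inj_on[OF s, of "{..<length xs}"]
    by (simp add: distinct_map lessThan_atLeast0)
  have sP: "set P = {..<length xs}" unfolding P_def using permutes_image[OF s]
    by (simp add: lessThan_atLeast0)
  have mp: "map (\<lambda>i. xs ! \<sigma> i) [0..<length xs] = map ((!) xs) P" unfolding P_def by simp
  let ?xs' = "map ((!) xs) P"
  have upd: "(us @ ws)[length us + i := v] = us @ ws[i := v]" for us ws :: "'v list" and i v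
    by (simp add: list_update_append)
  have "m (xs @ ws) = scale \<kappa> (m (?xs' @ ws))" if "length ws = 2" for ws
  proof (rule extS[where S="{0,1}" and n=2 and F="\<lambda>ws. m (xs @ ws)"
               and H="\<lambda>ws. scale \<kappa> (m (?xs' @ ws))" and Q="\<lambda>_. True"])
    show "m (xs @ ys[i := u + w]) = m (xs @ ys[i := u]) + m (xs @ ys[i := w])"
      if "i \<in> {0,1}" "length ys = 2" for i ys u w
      using m_add[of "xs @ ys" "length xs + i" u w] upd[of xs ys i] that by auto
    have lx': "length ?xs' = length xs" using sP dP distinct_card by fastforce
    show "scale \<kappa> (m (?xs' @ ys[i := u + w])) = scale \<kappa> (m (?xs' @ ys[i := u])) + scale \<kappa> (m (?xs' @ ys[i := w]))"
      if "i \<in> {0,1}" "length ys = 2" for i ys u w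
      using m_add[of "?xs' @ ys" "length ?xs' + i" u w] upd[of ?xs' ys i] that
      by (auto simp: vs.scale_right_distrib simp del: length_map)
    show "m (xs @ ys) = scale \<kappa> (m (?xs' @ ys))"
      if l2: "length ys = 2" and hd: "\<forall>i\<in>{0,1}. \<exists>d. ys ! i \<in> G d" for ys
    proof -
      have "ys = [ys!0, ys!1]" using l2 by (intro nth_equalityI) (auto simp: less_Suc_eq nth_Cons split: nat.splits)
      moreover obtain a b where "ys!0 \<in> G a" "ys!1 \<in> G b" using hd by auto
      ultimately show ?thesis unfolding \<kappa>_def
        using perm_hom[OF h _ _ dP sP, of "ys!0" a "ys!1" b] by metis
    qed
  qed (use that in auto)
  hence "m (xs @ [y, z]) = scale \<kappa> (m (?xs' @ [y, z]))" by simp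
  thus ?thesis unfolding mp \<kappa>_def P_def .
qed

end

theorem lemma6p1:
  fixes scale :: "'k::field_char_0 \<Rightarrow> 'v::ab_group_add \<Rightarrow> 'v"
    and G :: "int \<Rightarrow> 'v set" and one :: 'v and M m :: "'v list \<Rightarrow> 'v"
  assumes "correlation_algebra scale G one M"
    and "assoc_family scale G M m"
  shows "(\<forall>x. m [x, one] = x)
       \<and> (\<forall>xs j. 3 \<le> length xs \<and> j < length xs \<and> xs ! j = one \<longrightarrow> m xs = 0)
       \<and> (\<forall>xs y z a b. y \<in> G a \<and> z \<in> G b \<longrightarrow>
            m (xs @ [y, z]) = scale (if odd (a * b) then -1 else 1) (m (xs @ [z, y])))
       \<and> (\<forall>xs ds y z \<sigma>. 2 \<le> length xs \<and> homog G xs ds \<and> \<sigma> permutes {..<length xs} \<longrightarrow>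
            m (xs @ [y, z]) = scale (of_int (koszul ds (map \<sigma> [0..<length xs])))
                                (m (map (\<lambda>i. xs ! \<sigma> i) [0..<length xs] @ [y, z])))"
proof -
  interpret CA scale G one M m by (rule CA.intro) (fact assms)+
  show ?thesis using part1 part2 part3 part4 by blast
qed


end
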